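(* Let $q\ge 2$ be a prime power, $n\ge 1$, and let $f\in\mathbb{F}_q[x]$, $f\ne 0$, with $0\le\deg f<n$. Let $A(f,n)$ be the number of $h\in\mathbb{F}_q[x]$ such that both $h$ and $h+f$ are monic irreducible polynomials of degree $n$, and let $\widetilde{A}(f,n)$ be the number of $h\in\mathbb{F}_q[x]$ such that both $h$ and $h+f$ are (not necessarily monic) irreducible polynomials of degree $n$. Then $$A(f,n)\le \frac{8q^n}{n^2(1-1/q)}E(f)\qquad\text{and}\qquad \widetilde{A}(f,n)\le\frac{8q^{n+1}}{n^2}E(f).$$
   Context: For $f\in\mathbb{F}_q[x]$, $|f|=q^{\deg f}$. The letter $p$ denotes a monic irreducible polynomial in $\mathbb{F}_q[x]$, and $E(f)=\prod_{p\mid f}\left(1+\frac{1}{|p|}\right)$, the product over monic irreducible divisors $p$ of $f$. *)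

theory Defs
  imports "HOL-Computational_Algebra.Polynomial_Factorial" "HOL-Library.Cardinality"
begin

definition poly_abs :: "'a::{finite,field} poly \<Rightarrow> real" where
  "poly_abs f = real CARD('a) ^ degree f"

definition E_fun :: "'a::{finite,field} poly \<Rightarrow> real" where
  "E_fun f = (\<Prod>p \<in> {p. lead_coeff p = 1 \<and> irreducible p \<and> p dvd f}. 1 + 1 / poly_abs p)"

definition A_count :: "'a::{finite,field} poly \<Rightarrow> nat \<Rightarrow> nat" where
  "A_count f n = card {h. lead_coeff h = 1 \<and> irreducible h \<and> degree h = n \<and>
                          lead_coeff (h + f) = 1 \<and> irreducible (h + f) \<and> degree (h + f) = n}"

definition A_tilde_count :: "'a::{finite,field} poly \<Rightarrow> nat \<Rightarrow> nat" where
  "A_tilde_count f n = card {h. irreducible h \<and> degree h = n \<and>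
                                irreducible (h + f) \<and> degree (h + f) = n}"

end

theory Submission
  imports Defs "HOL-Library.FuncSet"
begin


definition Pd :: "nat \<Rightarrow> 'a::zero poly set" where
  "Pd k = {r. r = 0 \<or> degree r < k}"

definition Mon :: "nat \<Rightarrow> 'a::{zero,one} poly set" where
  "Mon k = {h. lead_coeff h = 1 \<and> degree h = k}"

lemma Pd_0: "Pd 0 = {0}" by (auto simp: Pd_def)

lemma Pd_Suc: "Pd (Suc k) = (\<lambda>(a,r). pCons a r) ` (UNIV \<times> Pd k)"
proof (rule set_eqI)
  fix p :: "'a poly"
  show "p \<in> Pd (Suc k) \<longleftrightarrow> p \<in> (\<lambda>(a,r). pCons a r) ` (UNIV \<times> Pd k)"
  proof
    assume "p \<in> Pd (Suc k)"
    obtain a r where p: "p = pCons a r" by (cases p) auto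
    have "r \<in> Pd k" using \<open>p \<in> Pd (Suc k)\<close> unfolding p Pd_def
      by (auto simp: degree_pCons_eq_if split: if_splits)
    then show "p \<in> (\<lambda>(a,r). pCons a r) ` (UNIV \<times> Pd k)" using p by auto
  next
    assume "p \<in> (\<lambda>(a,r). pCons a r) ` (UNIV \<times> Pd k)"
    then obtain a r where "p = pCons a r" "r \<in> Pd k" by auto
    then show "p \<in> Pd (Suc k)" by (auto simp: Pd_def degree_pCons_eq_if)
  qed
qed

lemma inj_pCons2: "inj (\<lambda>(a,r). pCons a r)"
  by (auto simp: inj_def)

lemma finite_card_Pd: "finite (Pd k :: 'a::{finite,zero} poly set) \<and> card (Pd k :: 'a poly set) = CARD('a) ^ k"
proof (induction k)
  case 0 then show ?case by (simp add: Pd_0)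
next
  case (Suc k)
  have i: "inj_on (\<lambda>(a,r). pCons a r) (UNIV \<times> (Pd k :: 'a poly set))"
    using inj_pCons2 by (metis inj_on_subset subset_UNIV)
  show ?case unfolding Pd_Suc using Suc
    by (simp add: card_image[OF i] card_cartesian_product)
qed

lemma Mon_0: "Mon 0 = {1::'a::field poly}"
  by (auto simp: Mon_def elim!: degree_eq_zeroE)

lemma Mon_Suc: "Mon (Suc k) = (\<lambda>(a,r). pCons a r) ` (UNIV \<times> (Mon k :: 'a::field poly set))"
proof (rule set_eqI)
  fix p :: "'a poly"
  show "p \<in> Mon (Suc k) \<longleftrightarrow> p \<in> (\<lambda>(a,r). pCons a r) ` (UNIV \<times> Mon k)"
  proof
    assume "p \<in> Mon (Suc k)"
    obtain a r where p: "p = pCons a r" by (cases p) auto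
    have "r \<noteq> 0" using \<open>p \<in> Mon (Suc k)\<close> unfolding p Mon_def by auto
    then have "r \<in> Mon k" using \<open>p \<in> Mon (Suc k)\<close> unfolding p Mon_def
      by (auto simp: degree_pCons_eq_if)
    then show "p \<in> (\<lambda>(a,r). pCons a r) ` (UNIV \<times> Mon k)" using p by auto
  next
    assume "p \<in> (\<lambda>(a,r). pCons a r) ` (UNIV \<times> Mon k)"
    then obtain a r where "p = pCons a r" "r \<in> Mon k" by auto
    moreover have "r \<noteq> 0" using \<open>r \<in> Mon k\<close> by (auto simp: Mon_def)
    ultimately show "p \<in> Mon (Suc k)" by (auto simp: Mon_def degree_pCons_eq_if)
  qed
qed

lemma finite_card_Mon: "finite (Mon k :: 'a::{finite,field} poly set) \<and> card (Mon k :: 'a poly set) = CARD('a) ^ k"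
proof (induction k)
  case 0 then show ?case by (simp add: Mon_0)
next
  case (Suc k)
  have i: "inj_on (\<lambda>(a,r). pCons a r) (UNIV \<times> (Mon k :: 'a poly set))"
    using inj_pCons2 by (metis inj_on_subset subset_UNIV)
  show ?case unfolding Mon_Suc using Suc
    by (simp add: card_image[OF i] card_cartesian_product)
qed



definition Res :: "'a::zero poly \<Rightarrow> 'a poly set" where
  "Res M = Pd (degree M)"

lemma finite_Res: "finite (Res (M :: 'a::{finite,field} poly))"
  using finite_card_Pd by (auto simp: Res_def)

lemma card_Res: "card (Res (M :: 'a::{finite,field} poly)) = CARD('a) ^ degree M"
  using finite_card_Pd by (auto simp: Res_def)

lemma mod_in_Res: "(M::'a::field poly) \<noteq> 0 \<Longrightarrow> r mod M \<in> Res M"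
  using degree_mod_less[of M r] by (auto simp: Res_def Pd_def)

lemma Res_mod: "r \<in> Res (M::'a::field poly) \<Longrightarrow> r mod M = r"
  by (auto simp: Res_def Pd_def mod_poly_less)

lemma finite_Mon: "finite (Mon k :: 'a::{finite,field} poly set)"
  using finite_card_Mon by blast

lemma card_Mon: "card (Mon k :: 'a::{finite,field} poly set) = CARD('a) ^ k"
  using finite_card_Mon by blast

lemma fiber_eq:
  fixes M r :: "'a::field poly"
  assumes M: "lead_coeff M = 1" and d: "degree M \<le> n" and r: "r \<in> Res M"
  shows "{h \<in> Mon n. h mod M = r} = (\<lambda>k. M * k + r) ` Mon (n - degree M)"
proof (rule set_eqI)
  fix h
  have M0: "M \<noteq> 0" using M by auto
  have rdeg: "r = 0 \<or> degree r < degree M" using r by (auto simp: Res_def Pd_def)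
  show "h \<in> {h \<in> Mon n. h mod M = r} \<longleftrightarrow> h \<in> (\<lambda>k. M * k + r) ` Mon (n - degree M)"
  proof
    assume h: "h \<in> {h \<in> Mon n. h mod M = r}"
    define k where "k = h div M"
    have hk: "h = M * k + r" using h div_mult_mod_eq[of h M] unfolding k_def by (metis (mono_tags, lifting) mem_Collect_eq mult.commute)
    have h0: "h \<noteq> 0" and hd: "degree h = n" and hl: "lead_coeff h = 1" using h by (auto simp: Mon_def)
    have k0: "k \<noteq> 0"
    proof
      assume "k = 0"
      then have "h = r" using hk by simp
      then show False using rdeg h0 hd d by auto
    qed
    have dMk: "degree (M * k) = degree M + degree k" using M0 k0 by (simp add: degree_mult_eq)
    have lt: "degree r < degree (M * k)" if "r \<noteq> 0" using rdeg that dMk by auto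
    have "degree h = degree (M * k) \<and> lead_coeff h = lead_coeff (M * k)"
    proof (cases "r = 0")
      case True then show ?thesis using hk by simp
    next
      case False
      then have "degree r < degree (M * k)" using lt by blast
      then show ?thesis unfolding hk
        using degree_add_eq_left lead_coeff_add_le[of r "M*k"] by (metis add.commute)
    qed
    then have "k \<in> Mon (n - degree M)" using hd hl dMk M lead_coeff_mult[of M k] by (auto simp: Mon_def)
    then show "h \<in> (\<lambda>k. M * k + r) ` Mon (n - degree M)" using hk by auto
  next
    assume "h \<in> (\<lambda>k. M * k + r) ` Mon (n - degree M)"
    then obtain k where k: "k \<in> Mon (n - degree M)" and hk: "h = M * k + r" by auto
    have k0: "k \<noteq> 0" using k by (auto simp: Mon_def)
    have dMk: "degree (M * k) = n" using M0 k0 k d by (simp add: degree_mult_eq Mon_def)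
    have lk: "lead_coeff k = 1" using k unfolding Mon_def by blast
    have lMk: "lead_coeff (M * k) = 1" using M lk by (simp add: lead_coeff_mult)
    have lt: "degree r < degree (M * k)" if "r \<noteq> 0" using rdeg that dMk d by auto
    have "degree h = n \<and> lead_coeff h = 1"
    proof (cases "r = 0")
      case True then show ?thesis using hk dMk lMk by simp
    next
      case False
      then have "degree r < degree (M * k)" using lt by blast
      then show ?thesis unfolding hk
        using degree_add_eq_left lead_coeff_add_le[of r "M*k"] dMk lMk by (metis add.commute)
    qed
    moreover have "h mod M = r" using hk Res_mod[OF r] by (metis mod_mult_self2 add.commute mult.commute)
    ultimately show "h \<in> {h \<in> Mon n. h mod M = r}" by (auto simp: Mon_def)
  qed
qed

lemma card_fiber:
  fixes M r :: "'a::{finite,field} poly"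
  assumes M: "lead_coeff M = 1" and d: "degree M \<le> n" and r: "r \<in> Res M"
  shows "card {h \<in> Mon n. h mod M = r} = CARD('a) ^ (n - degree M)"
proof -
  have M0: "M \<noteq> 0" using M by auto
  have "inj_on (\<lambda>k. M * k + r) (Mon (n - degree M))"
    using M0 by (auto simp: inj_on_def)
  then show ?thesis using fiber_eq[OF assms] card_Mon by (simp add: card_image)
qed

lemma sum_Mon_mod:
  fixes M :: "'a::{finite,field} poly" and \<Psi> :: "'a poly \<Rightarrow> real"
  assumes M: "lead_coeff M = 1" and d: "degree M \<le> n"
  shows "(\<Sum>h\<in>Mon n. \<Psi> (h mod M)) = real CARD('a) ^ (n - degree M) * (\<Sum>r\<in>Res M. \<Psi> r)"
proof -
  have M0: "M \<noteq> 0" using M by auto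
  have "(\<Sum>h\<in>Mon n. \<Psi> (h mod M)) = (\<Sum>r\<in>Res M. \<Sum>h\<in>{h \<in> Mon n. h mod M = r}. \<Psi> (h mod M))"
    by (rule sum.group[symmetric]) (use finite_Mon finite_Res mod_in_Res[OF M0] in auto)
  also have "\<dots> = (\<Sum>r\<in>Res M. \<Sum>h\<in>{h \<in> Mon n. h mod M = r}. \<Psi> r)"
    by (rule sum.cong) auto
  also have "\<dots> = (\<Sum>r\<in>Res M. real CARD('a) ^ (n - degree M) * \<Psi> r)"
    by (rule sum.cong) (auto simp: card_fiber[OF M d])
  finally show ?thesis by (simp add: sum_distrib_left)
qed



lemma poly_bezout:
  fixes p a :: "'a::field poly"
  shows "\<exists>u v. (p*u + a*v) dvd p \<and> (p*u + a*v) dvd a"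
proof (cases "p = 0 \<and> a = 0")
  case True then show ?thesis by auto
next
  case False
  define P where "P = (\<lambda>x. x \<noteq> 0 \<and> (\<exists>u v. x = p*u + a*v))"
  have "P p \<or> P a" using False unfolding P_def
    by (metis add.commute add_0 mult.right_neutral mult_zero_right)
  then have "\<exists>x. P x" by blast
  then obtain d where Pd: "P d" and dmin: "\<And>y. P y \<Longrightarrow> degree d \<le> degree y"
    using ex_has_least_nat[of P _ degree] by metis
  obtain u v where duv: "d = p*u + a*v" and d0: "d \<noteq> 0" using Pd unfolding P_def by blast
  have key: "d dvd x" if xin: "\<exists>s t. x = p*s + a*t" for x
  proof (rule ccontr)
    assume nd: "\<not> d dvd x"
    obtain s t where xst: "x = p*s + a*t" using xin by blast
    have "x mod d = x - (x div d) * d" by (simp add: minus_div_mult_eq_mod)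
    also have "\<dots> = p*(s - (x div d)*u) + a*(t - (x div d)*v)" unfolding xst duv
      by (simp add: algebra_simps)
    finally have "P (x mod d)" unfolding P_def using nd by (auto simp: dvd_eq_mod_eq_0)
    then have "degree d \<le> degree (x mod d)" by (rule dmin)
    moreover have "degree (x mod d) < degree d" using degree_mod_less_degree[OF d0 nd] .
    ultimately show False by simp
  qed
  have "d dvd p" by (rule key) (metis add.right_neutral mult.right_neutral mult_zero_right)
  moreover have "d dvd a" by (rule key) (metis add_0 mult.right_neutral mult_zero_right)
  ultimately show ?thesis using duv by blast
qed

lemma irreducible_euclid:
  fixes p a b :: "'a::field poly"
  assumes p: "irreducible p" and dvd: "p dvd a * b"
  shows "p dvd a \<or> p dvd b"
proof (cases "p dvd a")
  case True then show ?thesis by blast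
next
  case False
  note na = False
  obtain u v where d1: "(p*u + a*v) dvd p" and d2: "(p*u + a*v) dvd a" using poly_bezout by blast
  define d where "d = p*u + a*v"
  obtain k where pk: "p = d * k" using d1 unfolding d_def by (auto elim: dvdE)
  have "is_unit d \<or> is_unit k" using p pk by (simp add: irreducibleD)
  moreover have "\<not> is_unit k"
  proof
    assume "is_unit k"
    then have "p dvd d" by (simp add: pk mult_unit_dvd_iff)
    then have "p dvd a" using d2 unfolding d_def by (rule dvd_trans)
    then show False using na by blast
  qed
  ultimately have "is_unit d" by blast
  then obtain d' where dd: "1 = d * d'" by (auto elim: dvdE)
  have "b = b * (d * d')" using dd by simp
  also have "\<dots> = p*(u*b*d') + (a*b)*(v*d')" by (simp add: d_def algebra_simps)
  finally have "b = p*(u*b*d') + (a*b)*(v*d')" .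
  then have "p dvd b" using dvd by (metis dvd_add dvd_mult2 dvd_triv_left)
  then show ?thesis by blast
qed



definition mirr :: "'a::field poly \<Rightarrow> bool" where
  "mirr p \<longleftrightarrow> lead_coeff p = 1 \<and> irreducible p"

lemma irr_deg: "irreducible (p::'a::field poly) \<Longrightarrow> degree p \<ge> 1"
  using is_unit_iff_degree[of p] by (auto simp: irreducible_def)

lemma irr_dvd_small:
  fixes p h :: "'a::field poly"
  assumes "irreducible h" "irreducible p" "p dvd h" "degree p < degree h"
  shows False
proof -
  obtain k where hk: "h = p * k" using assms(3) by (auto elim: dvdE)
  have "is_unit p \<or> is_unit k" using assms(1) hk by (simp add: irreducibleD)
  moreover have "\<not> is_unit p" using assms(2) by (auto simp: irreducible_def)
  moreover have "k \<noteq> 0" using hk assms(1) by auto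
  moreover have "p \<noteq> 0" using assms(2) by auto
  ultimately have "degree k = 0" using is_unit_iff_degree by blast
  then have "degree h = degree p" using hk \<open>k \<noteq> 0\<close> \<open>p \<noteq> 0\<close> by (simp add: degree_mult_eq)
  then show False using assms(4) by simp
qed

lemma mirr_dvd_eq:
  fixes p p' :: "'a::field poly"
  assumes "mirr p" "mirr p'" "p dvd p'"
  shows "p = p'"
proof -
  obtain k where hk: "p' = p * k" using assms(3) by (auto elim: dvdE)
  have "is_unit p \<or> is_unit k" using assms(2) hk irreducibleD unfolding mirr_def by metis
  moreover have "\<not> is_unit p" using assms(1) by (auto simp: irreducible_def mirr_def)
  moreover have "k \<noteq> 0" using hk assms(2) by (auto simp: mirr_def)
  ultimately have "degree k = 0" using is_unit_iff_degree by blast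
  then obtain c where "k = [:c:]" by (metis degree_eq_zeroE)
  moreover have "lead_coeff k = 1" using hk assms(1,2) by (simp add: mirr_def lead_coeff_mult)
  ultimately have "k = 1" by (simp add: one_pCons)
  then show ?thesis using hk by simp
qed

lemma irr_dvd_prod:
  fixes p :: "'a::field poly"
  assumes "irreducible p" "finite U" "p dvd (\<Prod>u\<in>U. g u)"
  shows "\<exists>u\<in>U. p dvd g u"
  using assms(2,3)
proof (induction U rule: finite_induct)
  case empty
  then show ?case using assms(1) by (auto simp: irreducible_def)
next
  case (insert x F)
  then have "p dvd g x * (\<Prod>u\<in>F. g u)" by simp
  then show ?case using irreducible_euclid[OF assms(1)] insert by blast
qed

lemma Pd_diff: "(r::'a::field poly) \<in> Pd k \<Longrightarrow> r' \<in> Pd k \<Longrightarrow> r - r' \<in> Pd k"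
  using degree_diff_le_max[of r r'] by (auto simp: Pd_def)

lemma dvd_Prod: "finite U \<Longrightarrow> (u::'a::comm_monoid_mult) \<in> U \<Longrightarrow> u dvd \<Prod>U"
  by (metis dvd_triv_left prod.remove)

lemma crt_bij:
  fixes p M :: "'a::{finite,field} poly"
  assumes p: "lead_coeff p = 1" and M: "lead_coeff M = 1"
    and cop: "\<And>r. p dvd r \<Longrightarrow> M dvd r \<Longrightarrow> p * M dvd r"
  shows "bij_betw (\<lambda>r. (r mod p, r mod M)) (Res (p*M)) (Res p \<times> Res M)"
proof -
  have p0: "p \<noteq> 0" and M0: "M \<noteq> 0" using p M by auto
  have dpM: "degree (p*M) = degree p + degree M" using p0 M0 by (simp add: degree_mult_eq)
  have inj: "inj_on (\<lambda>r. (r mod p, r mod M)) (Res (p*M))"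
  proof (rule inj_onI)
    fix r r' assume r: "r \<in> Res (p*M)" and r': "r' \<in> Res (p*M)"
      and eq: "(r mod p, r mod M) = (r' mod p, r' mod M)"
    have "p dvd r - r'" "M dvd r - r'" using eq by (auto simp: mod_eq_dvd_iff)
    then have dv: "p*M dvd r - r'" by (rule cop)
    have "r - r' \<in> Res (p*M)" using r r' Pd_diff by (auto simp: Res_def)
    then have "r - r' = 0 \<or> degree (r - r') < degree (p*M)" by (auto simp: Res_def Pd_def)
    then have "r - r' = 0" using dvd_imp_degree_le[OF dv] by force
    then show "r = r'" by simp
  qed
  have sub: "(\<lambda>r. (r mod p, r mod M)) ` Res (p*M) \<subseteq> Res p \<times> Res M"
    using mod_in_Res p0 M0 by auto
  have "card ((\<lambda>r. (r mod p, r mod M)) ` Res (p*M)) = card (Res p \<times> Res M)"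
    using card_image[OF inj] by (simp add: card_Res card_cartesian_product dpM power_add)
  then have "(\<lambda>r. (r mod p, r mod M)) ` Res (p*M) = Res p \<times> Res M"
    using sub by (simp add: card_subset_eq finite_Res)
  then show ?thesis using inj by (simp add: bij_betw_def)
qed

lemma mirr_not_dvd_prod:
  fixes p :: "'a::field poly"
  assumes "mirr p" "finite U" "\<forall>u\<in>U. mirr u" "p \<notin> U"
  shows "\<not> p dvd (\<Prod>U)"
  using irr_dvd_prod[of p U id] assms mirr_dvd_eq by (fastforce simp: mirr_def)

lemma prod_sum_Res:
  fixes U :: "'a::{finite,field} poly set" and \<phi> :: "'a poly \<Rightarrow> 'a poly \<Rightarrow> real"
  assumes "finite U" "\<forall>p\<in>U. mirr p"
  shows "(\<Sum>r\<in>Res (\<Prod>U). \<Prod>p\<in>U. \<phi> p (r mod p)) = (\<Prod>p\<in>U. \<Sum>a\<in>Res p. \<phi> p a)"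
  using assms
proof (induction U rule: finite_induct)
  case empty
  have "Res (1::'a poly) = {0}" by (simp add: Res_def Pd_0)
  then show ?case by simp
next
  case (insert p U)
  define M where "M = \<Prod>U"
  have pm: "mirr p" and Um: "\<forall>u\<in>U. mirr u" using insert by auto
  have Mm: "lead_coeff M = 1" unfolding M_def using Um by (simp add: lead_coeff_prod mirr_def)
  have pl: "lead_coeff p = 1" using pm by (simp add: mirr_def)
  have ndv: "\<not> p dvd M" unfolding M_def using mirr_not_dvd_prod[OF pm insert(1) Um insert(2)] .
  have cop: "p * M dvd r" if h1: "p dvd r" and h2: "M dvd r" for r
  proof -
    obtain s where rs: "r = M * s" using h2 by (auto elim: dvdE)
    have "p dvd M \<or> p dvd s" using irreducible_euclid[of p M s] pm h1 rs by (simp add: mirr_def)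
    then have "p dvd s" using ndv by blast
    then show ?thesis using rs by (simp add: mult.commute mult_dvd_mono)
  qed
  define F where "F = (\<lambda>a b. \<phi> p a * (\<Prod>u\<in>U. \<phi> u (b mod u)))"
  have "(\<Sum>r\<in>Res (\<Prod>(insert p U)). \<Prod>u\<in>insert p U. \<phi> u (r mod u))
      = (\<Sum>r\<in>Res (p * M). F (r mod p) (r mod M))"
  proof -
    have "\<Prod>(insert p U) = p * M" unfolding M_def using insert by simp
    moreover have "(\<Prod>u\<in>insert p U. \<phi> u (r mod u)) = F (r mod p) (r mod M)" for r
    proof -
      have "(\<Prod>u\<in>U. \<phi> u (r mod u)) = (\<Prod>u\<in>U. \<phi> u (r mod M mod u))"
        by (rule prod.cong) (auto simp: M_def mod_mod_cancel insert(1) dvd_Prod)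
      then show ?thesis using insert by (simp add: F_def)
    qed
    ultimately show ?thesis by simp
  qed
  also have "\<dots> = (\<Sum>x\<in>Res p \<times> Res M. F (fst x) (snd x))"
    using sum.reindex_bij_betw[OF crt_bij[OF pl Mm cop], of "\<lambda>x. F (fst x) (snd x)"] by simp
  also have "\<dots> = (\<Sum>a\<in>Res p. \<Sum>b\<in>Res M. F a b)"
    by (simp add: sum.cartesian_product')
  also have "\<dots> = (\<Sum>a\<in>Res p. \<phi> p a) * (\<Sum>b\<in>Res M. \<Prod>u\<in>U. \<phi> u (b mod u))"
    by (simp add: F_def sum_product)
  also have "\<dots> = (\<Prod>u\<in>insert p U. \<Sum>a\<in>Res u. \<phi> u a)"
    using insert Um by (simp add: M_def)
  finally show ?case .
qed

lemma indep_sum: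
  fixes U :: "'a::{finite,field} poly set" and \<phi> :: "'a poly \<Rightarrow> 'a poly \<Rightarrow> real"
  assumes "finite U" "\<forall>p\<in>U. mirr p" "degree (\<Prod>U) \<le> n"
  shows "(\<Sum>h\<in>Mon n. \<Prod>p\<in>U. \<phi> p (h mod p))
       = real CARD('a) ^ (n - degree (\<Prod>U)) * (\<Prod>p\<in>U. \<Sum>a\<in>Res p. \<phi> p a)"
proof -
  define M where "M = \<Prod>U"
  have Mm: "lead_coeff M = 1" unfolding M_def using assms(2) by (simp add: lead_coeff_prod mirr_def)
  have "(\<Sum>h\<in>Mon n. \<Prod>p\<in>U. \<phi> p (h mod p)) = (\<Sum>h\<in>Mon n. (\<lambda>r. \<Prod>p\<in>U. \<phi> p (r mod p)) (h mod M))"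
    by (rule sum.cong[OF refl], rule prod.cong[OF refl])
       (auto simp: M_def mod_mod_cancel assms(1) dvd_Prod)
  also have "\<dots> = real CARD('a) ^ (n - degree M) * (\<Sum>r\<in>Res M. \<Prod>p\<in>U. \<phi> p (r mod p))"
    by (rule sum_Mon_mod[OF Mm]) (use assms(3) M_def in simp)
  finally show ?thesis using prod_sum_Res[OF assms(1,2)] by (simp add: M_def)
qed



definition bad :: "'a::field poly \<Rightarrow> 'a poly \<Rightarrow> 'a poly set" where
  "bad f p = {a \<in> Res p. p dvd a * (a + f)}"

definition gg :: "'a::{finite,field} poly \<Rightarrow> 'a poly \<Rightarrow> real" where
  "gg f p = real (card (bad f p)) / real CARD('a) ^ degree p"

definition bb :: "'a::field poly \<Rightarrow> 'a poly \<Rightarrow> 'a poly \<Rightarrow> real" where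
  "bb f p h = (if p dvd h * (h + f) then 1 else 0)"

definition psi :: "'a::{finite,field} poly \<Rightarrow> 'a poly set \<Rightarrow> 'a poly \<Rightarrow> real" where
  "psi f c h = (\<Prod>p\<in>c. bb f p h - gg f p)"

lemma bb_mod: "bb f p (h mod p) = bb f p h"
proof -
  have "(h mod p) * (h mod p + f) mod p = h * (h + f) mod p"
    by (metis mod_add_left_eq mod_mult_left_eq mult.commute)
  then show ?thesis unfolding bb_def by (simp add: dvd_eq_mod_eq_0)
qed

lemma sum_bb: "(\<Sum>a\<in>Res p. bb f p a) = real (card (bad f (p::'a::{finite,field} poly)))"
proof -
  have "(\<Sum>a\<in>Res p. bb f p a) = (\<Sum>a\<in>bad f p. 1)"
    unfolding bb_def bad_def using finite_Res[of p]
    by (simp add: sum.If_cases Int_def)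
  then show ?thesis by simp
qed

lemma card_Res_pos: "real CARD('a) ^ degree (p::'a::{finite,field} poly) > 0"
  by simp

lemma sum_lin: "(\<Sum>a\<in>Res p. bb f p a - gg f (p::'a::{finite,field} poly)) = 0"
  by (simp add: sum_subtractf sum_bb gg_def card_Res)

lemma bb01: "bb f p a * bb f p a = bb f p a"
  by (simp add: bb_def)

lemma sum_sq: "(\<Sum>a\<in>Res p. (bb f p a - gg f p) * (bb f p a - gg f (p::'a::{finite,field} poly)))
   = real CARD('a) ^ degree p * (gg f p * (1 - gg f p))"
proof -
  have "(\<Sum>a\<in>Res p. (bb f p a - gg f p) * (bb f p a - gg f p))
      = (\<Sum>a\<in>Res p. bb f p a * (1 - 2 * gg f p) + gg f p * gg f p)"
    by (rule sum.cong) (auto simp: algebra_simps bb01)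
  also have "\<dots> = real (card (bad f p)) * (1 - 2 * gg f p) + real CARD('a) ^ degree p * (gg f p * gg f p)"
    by (simp add: sum.distrib sum_distrib_right[symmetric] sum_bb card_Res)
  also have "\<dots> = real CARD('a) ^ degree p * (gg f p * (1 - gg f p))"
    by (simp add: gg_def field_simps)
  finally show ?thesis .
qed

definition W :: "'a::zero poly set \<Rightarrow> nat" where
  "W c = (\<Sum>p\<in>c. degree p)"

lemma degree_Prod_mirr: "\<forall>p\<in>c. mirr p \<Longrightarrow> degree (\<Prod>c) = W c"
  unfolding W_def by (rule degree_prod_sum_eq) (auto simp: mirr_def)

lemma orth:
  fixes f :: "'a::{finite,field} poly"
  assumes fin: "finite c" "finite c'" and m: "\<forall>p\<in>c \<union> c'. mirr p" and deg: "W (c \<union> c') \<le> n"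
  shows "(\<Sum>h\<in>Mon n. psi f c h * psi f c' h)
       = (if c = c' then real CARD('a) ^ n * (\<Prod>p\<in>c. gg f p * (1 - gg f p)) else 0)"
proof -
  define U where "U = c \<union> c'"
  define \<phi> where "\<phi> = (\<lambda>p a. (if p \<in> c then bb f p a - gg f p else 1) * (if p \<in> c' then bb f p a - gg f p else 1))"
  have finU: "finite U" using fin by (simp add: U_def)
  have ext: "(\<Prod>p\<in>U. (if p \<in> d then X p else 1)) = (\<Prod>p\<in>d. X p)" if "d \<subseteq> U" for d and X :: "'a poly \<Rightarrow> real"
    using that finU by (simp add: prod.If_cases Int_absorb1 Int_def[symmetric])
  have "psi f c h * psi f c' h = (\<Prod>p\<in>U. \<phi> p (h mod p))" for h
  proof -
    have "psi f c h * psi f c' h = (\<Prod>p\<in>U. (if p \<in> c then bb f p h - gg f p else 1)) * (\<Prod>p\<in>U. (if p \<in> c' then bb f p h - gg f p else 1))"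
      unfolding psi_def using ext[of c "\<lambda>p. bb f p h - gg f p"] ext[of c' "\<lambda>p. bb f p h - gg f p"]
      by (simp add: U_def)
    also have "\<dots> = (\<Prod>p\<in>U. \<phi> p (h mod p))"
      unfolding \<phi>_def by (simp add: prod.distrib bb_mod cong: if_cong)
    finally show ?thesis .
  qed
  then have "(\<Sum>h\<in>Mon n. psi f c h * psi f c' h) = (\<Sum>h\<in>Mon n. \<Prod>p\<in>U. \<phi> p (h mod p))" by simp
  also have "\<dots> = real CARD('a) ^ (n - degree (\<Prod>U)) * (\<Prod>p\<in>U. \<Sum>a\<in>Res p. \<phi> p a)"
    by (rule indep_sum) (use finU m deg degree_Prod_mirr[of U] in \<open>auto simp: U_def\<close>)
  also have "\<dots> = (if c = c' then real CARD('a) ^ n * (\<Prod>p\<in>c. gg f p * (1 - gg f p)) else 0)"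
  proof (cases "c = c'")
    case True
    have "(\<Prod>p\<in>U. \<Sum>a\<in>Res p. \<phi> p a) = (\<Prod>p\<in>c. real CARD('a) ^ degree p * (gg f p * (1 - gg f p)))"
      by (rule prod.cong) (auto simp: U_def True \<phi>_def sum_sq)
    also have "\<dots> = real CARD('a) ^ W c * (\<Prod>p\<in>c. gg f p * (1 - gg f p))"
      by (simp add: prod.distrib W_def power_sum)
    finally show ?thesis using True degree_Prod_mirr[of c] m deg
      by (simp add: U_def power_add[symmetric])
  next
    case False
    then obtain p where p: "p \<in> U" "(p \<in> c) \<noteq> (p \<in> c')" unfolding U_def by blast
    have "(\<Sum>a\<in>Res p. \<phi> p a) = 0"
      using p sum_lin[of f p] by (cases "p \<in> c") (auto simp: \<phi>_def)
    then have "(\<Prod>p\<in>U. \<Sum>a\<in>Res p. \<phi> p a) = 0" using p finU by (metis prod_zero)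
    then show ?thesis using False by simp
  qed
  finally show ?thesis .
qed



lemma aux_frac: "(x::real) \<noteq> 1 \<Longrightarrow> (- 1 / (1 - x)) * (- 1 / (1 - x)) * (x * (1 - x)) = x / (1 - x)"
proof -
  assume "x \<noteq> 1"
  then have d: "1 - x \<noteq> 0" by simp
  have "(- 1 / (1 - x)) * (- 1 / (1 - x)) * (x * (1 - x)) = x * ((1 - x) / ((1 - x) * (1 - x)))" by simp
  also have "\<dots> = x / (1 - x)" using d by simp
  finally show ?thesis .
qed

lemma sum_delta_helper: "finite C \<Longrightarrow> c \<in> C \<Longrightarrow> (\<Sum>c'\<in>C. a * b c' * (if c = c' then (X::real) else 0)) = a * b c * X"
proof -
  assume "finite C" "c \<in> C"
  have "(\<Sum>c'\<in>C. a * b c' * (if c = c' then X else 0)) = (\<Sum>c'\<in>C. if c = c' then a * b c * X else 0)"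
    by (rule sum.cong) auto
  also have "\<dots> = a * b c * X" using \<open>finite C\<close> \<open>c \<in> C\<close> by (simp add: sum.delta)
  finally show ?thesis .
qed

lemma sieve:
  fixes f :: "'a::{finite,field} poly" and S :: "'a poly set" and C :: "'a poly set set"
  assumes finS: "finite S" and mS: "\<forall>p\<in>S. mirr p" and g01: "\<forall>p\<in>S. 0 < gg f p \<and> gg f p < 1"
    and CS: "C \<subseteq> Pow S" and Cn: "\<forall>c\<in>C. \<forall>c'\<in>C. W (c \<union> c') \<le> n" and C0: "{} \<in> C"
  shows "real (card {h \<in> Mon n. \<forall>p\<in>S. bb f p h = 0}) * (\<Sum>c\<in>C. \<Prod>p\<in>c. gg f p / (1 - gg f p))
           \<le> real CARD('a) ^ n"
proof -
  define T where "T = {h \<in> Mon n. \<forall>p\<in>S. bb f p h = 0}"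
  define G where "G = (\<Sum>c\<in>C. \<Prod>p\<in>c. gg f p / (1 - gg f p))"
  define w where "w = (\<lambda>c. \<Prod>p\<in>c. - 1 / (1 - gg f p))"
  define v where "v = (\<lambda>h. \<Sum>c\<in>C. w c * psi f c h)"
  have finC: "finite C" using CS finS by (meson finite_Pow_iff finite_subset)
  have cfin: "finite c" "c \<subseteq> S" if "c \<in> C" for c using that CS finS by (auto intro: finite_subset)
  have G1: "G \<ge> 1"
  proof -
    have "G = (\<Prod>p\<in>{}. gg f p / (1 - gg f p)) + (\<Sum>c\<in>C - {{}}. \<Prod>p\<in>c. gg f p / (1 - gg f p))"
      unfolding G_def using C0 finC by (simp add: sum.remove)
    moreover have "(\<Sum>c\<in>C - {{}}. \<Prod>p\<in>c. gg f p / (1 - gg f p)) \<ge> 0"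
      by (rule sum_nonneg, rule prod_nonneg) (use g01 cfin in force)
    ultimately show ?thesis by simp
  qed
  have vT: "v h = G" if "h \<in> T" for h
  proof -
    have "w c * psi f c h = (\<Prod>p\<in>c. gg f p / (1 - gg f p))" if "c \<in> C" for c
    proof -
      have "w c * psi f c h = (\<Prod>p\<in>c. (- 1 / (1 - gg f p)) * (bb f p h - gg f p))"
        unfolding w_def psi_def by (simp only: prod.distrib)
      also have "\<dots> = (\<Prod>p\<in>c. gg f p / (1 - gg f p))"
        by (rule prod.cong) (use \<open>h \<in> T\<close> cfin[OF that] in \<open>auto simp: T_def\<close>)
      finally show ?thesis .
    qed
    then show ?thesis unfolding v_def G_def by simp
  qed
  have sumv: "(\<Sum>h\<in>Mon n. v h * v h) = real CARD('a) ^ n * G"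
  proof -
    have "(\<Sum>h\<in>Mon n. v h * v h) = (\<Sum>h\<in>Mon n. \<Sum>c\<in>C. \<Sum>c'\<in>C. w c * w c' * (psi f c h * psi f c' h))"
      unfolding v_def sum_product by (rule sum.cong[OF refl], rule sum.cong[OF refl], rule sum.cong[OF refl]) (simp add: mult_ac)
    also have "\<dots> = (\<Sum>c\<in>C. \<Sum>c'\<in>C. w c * w c' * (\<Sum>h\<in>Mon n. psi f c h * psi f c' h))"
      by (simp add: sum.swap[of _ "Mon n"] sum_distrib_left)
    also have "\<dots> = (\<Sum>c\<in>C. \<Sum>c'\<in>C. w c * w c' * (if c = c' then real CARD('a) ^ n * (\<Prod>p\<in>c. gg f p * (1 - gg f p)) else 0))"
    proof (intro sum.cong refl)
      fix c c' assume "c \<in> C" "c' \<in> C"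
      then show "w c * w c' * (\<Sum>h\<in>Mon n. psi f c h * psi f c' h) = w c * w c' * (if c = c' then real CARD('a) ^ n * (\<Prod>p\<in>c. gg f p * (1 - gg f p)) else 0)"
      proof -
        have "finite c" "finite c'" using cfin \<open>c \<in> C\<close> \<open>c' \<in> C\<close> by auto
        moreover have "\<forall>p\<in>c \<union> c'. mirr p" using cfin \<open>c \<in> C\<close> \<open>c' \<in> C\<close> mS by blast
        moreover have "W (c \<union> c') \<le> n" using Cn \<open>c \<in> C\<close> \<open>c' \<in> C\<close> by blast
        ultimately show ?thesis by (simp add: orth)
      qed
    qed
    also have "\<dots> = (\<Sum>c\<in>C. w c * w c * (real CARD('a) ^ n * (\<Prod>p\<in>c. gg f p * (1 - gg f p))))"
    proof (rule sum.cong[OF refl])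
      fix c assume "c \<in> C"
      then show "(\<Sum>c'\<in>C. w c * w c' * (if c = c' then real CARD('a) ^ n * (\<Prod>p\<in>c. gg f p * (1 - gg f p)) else 0)) = w c * w c * (real CARD('a) ^ n * (\<Prod>p\<in>c. gg f p * (1 - gg f p)))"
        using sum_delta_helper[OF finC] by blast
    qed
    also have "\<dots> = (\<Sum>c\<in>C. real CARD('a) ^ n * (\<Prod>p\<in>c. gg f p / (1 - gg f p)))"
    proof (rule sum.cong[OF refl])
      fix c assume c: "c \<in> C"
      have "w c * w c * (\<Prod>p\<in>c. gg f p * (1 - gg f p)) = (\<Prod>p\<in>c. (- 1 / (1 - gg f p)) * (- 1 / (1 - gg f p)) * (gg f p * (1 - gg f p)))"
        unfolding w_def by (simp only: prod.distrib)
      also have "\<dots> = (\<Prod>p\<in>c. gg f p / (1 - gg f p))"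
      proof (rule prod.cong[OF refl])
        fix p assume "p \<in> c"
        then have "1 - gg f p \<noteq> 0" using g01 cfin[OF c] by force
        then show "(- 1 / (1 - gg f p)) * (- 1 / (1 - gg f p)) * (gg f p * (1 - gg f p)) = gg f p / (1 - gg f p)"
          by (simp add: aux_frac)
      qed
      finally show "w c * w c * (real CARD('a) ^ n * (\<Prod>p\<in>c. gg f p * (1 - gg f p))) = real CARD('a) ^ n * (\<Prod>p\<in>c. gg f p / (1 - gg f p))"
        by (simp add: algebra_simps)
    qed
    finally show ?thesis by (simp add: G_def sum_distrib_left)
  qed
  have "real (card T) * (G * G) = (\<Sum>h\<in>T. v h * v h)" using vT by simp
  also have "\<dots> \<le> (\<Sum>h\<in>Mon n. v h * v h)"
    by (rule sum_mono2) (auto simp: T_def finite_Mon)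
  also have "\<dots> = real CARD('a) ^ n * G" by (rule sumv)
  finally have "(real (card T) * G) * G \<le> real CARD('a) ^ n * G" by (simp add: algebra_simps)
  then show ?thesis using G1 unfolding T_def G_def by simp
qed



lemma monic_deg0: "lead_coeff (a::'a::field poly) = 1 \<Longrightarrow> degree a = 0 \<Longrightarrow> a = 1"
  by (metis degree_eq_zeroE lead_coeff_pCons(2) one_pCons pCons_0_0)

lemma fac_exists:
  fixes a :: "'a::field poly"
  assumes "lead_coeff a = 1"
  shows "\<exists>A. (\<forall>p\<in>#A. mirr p) \<and> prod_mset A = a"
  using assms
proof (induction "degree a" arbitrary: a rule: less_induct)
  case less
  show ?case
  proof (cases "degree a = 0")
    case True
    then have "a = 1" using monic_deg0 less.prems by blast
    then show ?thesis by (intro exI[of _ "{#}"]) simp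
  next
    case deg: False
    show ?thesis
    proof (cases "irreducible a")
      case True
      then show ?thesis using less.prems by (intro exI[of _ "{#a#}"]) (simp add: mirr_def)
    next
      case False
      have a0: "a \<noteq> 0" using less.prems by auto
      have nu: "\<not> is_unit a" using deg a0 by (simp add: is_unit_iff_degree)
      then obtain b c where abc: "a = b * c" and nb: "\<not> is_unit b" and nc: "\<not> is_unit c"
        using False a0 nu unfolding irreducible_def by auto
      have b0: "b \<noteq> 0" and c0: "c \<noteq> 0" using abc a0 by auto
      have db: "degree b \<ge> 1" using nb b0 by (simp add: is_unit_iff_degree)
      have dc: "degree c \<ge> 1" using nc c0 by (simp add: is_unit_iff_degree)
      have dabc: "degree a = degree b + degree c" using abc b0 c0 by (simp add: degree_mult_eq)
      define u where "u = lead_coeff b"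
      have u0: "u \<noteq> 0" using b0 by (simp add: u_def)
      define b' where "b' = smult (inverse u) b"
      define c' where "c' = smult u c"
      have abc': "a = b' * c'" using abc u0 by (simp add: b'_def c'_def)
      have lb': "lead_coeff b' = 1" using u0 by (simp add: b'_def u_def)
      have lc': "lead_coeff c' = 1" using abc' lb' less.prems by (simp add: lead_coeff_mult)
      have "degree b' < degree a" "degree c' < degree a"
        using db dc dabc u0 by (auto simp: b'_def c'_def)
      then obtain B C where "\<forall>p\<in>#B. mirr p" "prod_mset B = b'" "\<forall>p\<in>#C. mirr p" "prod_mset C = c'"
        using less.hyps[of b'] less.hyps[of c'] lb' lc' by blast
      then show ?thesis using abc' by (intro exI[of _ "B + C"]) auto
    qed
  qed
qed

lemma irr_dvd_prod_mset:
  fixes p :: "'a::field poly"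
  assumes "irreducible p" "p dvd prod_mset B"
  shows "\<exists>q\<in>#B. p dvd q"
  using assms(2)
proof (induction B)
  case empty
  then show ?case using assms(1) by (auto simp: irreducible_def)
next
  case (add x B)
  then show ?case using irreducible_euclid[OF assms(1), of x "prod_mset B"] by auto
qed

lemma fac_unique:
  fixes A B :: "'a::field poly multiset"
  assumes "\<forall>p\<in>#A. mirr p" "\<forall>p\<in>#B. mirr p" "prod_mset A = prod_mset B"
  shows "A = B"
  using assms
proof (induction A arbitrary: B)
  case empty
  show ?case
  proof (rule ccontr)
    assume "{#} \<noteq> B"
    then obtain q where q: "q \<in># B" by (metis multiset_nonemptyE)
    then have "q dvd prod_mset B" by (simp add: dvd_prod_mset)
    then have "is_unit q" using empty.prems by simp
    then show False using empty.prems q by (auto simp: mirr_def irreducible_def)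
  qed
next
  case (add p A)
  have pm: "mirr p" using add.prems by simp
  have "p dvd prod_mset B" using add.prems(3) by (metis dvd_triv_left prod_mset.add_mset)
  then obtain q where q: "q \<in># B" "p dvd q" using irr_dvd_prod_mset pm by (auto simp: mirr_def)
  then have pq: "p = q" using mirr_dvd_eq pm add.prems(2) by blast
  define B' where "B' = B - {#p#}"
  have BB: "B = add_mset p B'" using q pq by (simp add: B'_def)
  have p0: "p \<noteq> 0" using pm by (auto simp: mirr_def)
  have e1: "prod_mset B = p * prod_mset B'" unfolding BB by simp
  have e2: "p * prod_mset A = prod_mset B" using add.prems(3) by simp
  have "prod_mset A = prod_mset B'" using e1 e2 p0 mult_left_cancel by metis
  moreover have "\<forall>q\<in>#B'. mirr q" using add.prems(2) unfolding BB by auto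
  moreover have "\<forall>q\<in>#A. mirr q" using add.prems(1) by auto
  ultimately have "A = B'" using add.IH by blast
  then show ?case using BB by simp
qed

definition fac :: "'a::field poly \<Rightarrow> 'a poly multiset" where
  "fac a = (SOME A. (\<forall>p\<in>#A. mirr p) \<and> prod_mset A = a)"

lemma fac: "lead_coeff a = 1 \<Longrightarrow> (\<forall>p\<in>#fac a. mirr p) \<and> prod_mset (fac a) = a"
proof -
  assume "lead_coeff a = 1"
  from fac_exists[OF this] have "\<exists>A. (\<forall>p\<in>#A. mirr p) \<and> prod_mset A = a" .
  then show ?thesis unfolding fac_def by (rule someI_ex)
qed

lemma lead_coeff_prod_mset: "\<forall>p\<in>#A. lead_coeff p = 1 \<Longrightarrow> lead_coeff (prod_mset (A::'a::field poly multiset)) = 1"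
  by (induction A) (auto simp: lead_coeff_mult)

lemma fac_prod_mset: "\<forall>p\<in>#A. mirr p \<Longrightarrow> fac (prod_mset A) = A"
proof -
  assume A: "\<forall>p\<in>#A. mirr p"
  have "lead_coeff (prod_mset A) = 1" using A lead_coeff_prod_mset by (auto simp: mirr_def)
  then have "(\<forall>p\<in>#fac (prod_mset A). mirr p) \<and> prod_mset (fac (prod_mset A)) = prod_mset A" by (rule fac)
  then show ?thesis using fac_unique[of "fac (prod_mset A)" A] A by blast
qed

lemma dvd_iff_in_fac:
  fixes a p :: "'a::field poly"
  assumes "lead_coeff a = 1" "mirr p"
  shows "p dvd a \<longleftrightarrow> p \<in># fac a"
proof
  assume "p dvd a"
  then have "p dvd prod_mset (fac a)" using fac[OF assms(1)] by simp
  then obtain q where "q \<in># fac a" "p dvd q" using irr_dvd_prod_mset assms(2) by (auto simp: mirr_def)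
  moreover have "mirr q" using \<open>q \<in># fac a\<close> fac[OF assms(1)] by blast
  ultimately have "p = q" using mirr_dvd_eq[OF assms(2)] by blast
  then show "p \<in># fac a" using \<open>q \<in># fac a\<close> by simp
next
  assume "p \<in># fac a"
  then have "p dvd prod_mset (fac a)" by (rule dvd_prod_mset)
  then show "p dvd a" using fac[OF assms(1)] by simp
qed

lemma fac_prod_D:
  fixes a :: "'a::field poly"
  assumes "lead_coeff a = 1" "set_mset (fac a) \<subseteq> D" "finite D"
  shows "a = (\<Prod>p\<in>D. p ^ count (fac a) p)"
proof -
  have "a = prod_mset (fac a)" using fac[OF assms(1)] by simp
  also have "\<dots> = (\<Prod>p\<in>set_mset (fac a). p ^ count (fac a) p)" by (rule prod_mset_multiplicity)
  also have "\<dots> = (\<Prod>p\<in>D. p ^ count (fac a) p)"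
    by (rule prod.mono_neutral_left) (use assms in \<open>auto simp: not_in_iff\<close>)
  finally show ?thesis .
qed

lemma degree_fac_D:
  fixes a :: "'a::field poly"
  assumes "lead_coeff a = 1" "set_mset (fac a) \<subseteq> D" "finite D" "\<forall>p\<in>D. mirr p"
  shows "degree a = (\<Sum>p\<in>D. count (fac a) p * degree p)"
proof -
  have "degree a = degree (\<Prod>p\<in>D. p ^ count (fac a) p)" using fac_prod_D[OF assms(1-3)] by simp
  also have "\<dots> = (\<Sum>p\<in>D. degree (p ^ count (fac a) p))"
    by (rule degree_prod_sum_eq) (use assms(4) in \<open>auto simp: mirr_def\<close>)
  also have "\<dots> = (\<Sum>p\<in>D. count (fac a) p * degree p)"
  proof (intro sum.cong refl)
    fix x assume "x \<in> D"
    then have "x \<noteq> 0" using assms(4) by (auto simp: mirr_def)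
    then show "degree (x ^ count (fac a) x) = count (fac a) x * degree x" by (simp add: degree_power_eq)
  qed
  finally show ?thesis .
qed

lemma count_fac_le:
  fixes a :: "'a::field poly"
  assumes "lead_coeff a = 1"
  shows "count (fac a) p \<le> degree a"
proof (cases "p \<in># fac a")
  case False then show ?thesis by (simp add: not_in_iff)
next
  case True
  have m: "\<forall>p\<in>set_mset (fac a). mirr p" using fac[OF assms] by blast
  have "degree a = (\<Sum>q\<in>set_mset (fac a). count (fac a) q * degree q)"
    by (rule degree_fac_D[OF assms]) (use m in auto)
  also have "\<dots> \<ge> count (fac a) p * degree p"
    by (rule member_le_sum) (use True in auto)
  moreover have "degree p \<ge> 1" using m True irr_deg by (auto simp: mirr_def)
  moreover have "count (fac a) p \<le> count (fac a) p * degree p" using \<open>degree p \<ge> 1\<close> by simp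
  ultimately show ?thesis by linarith
qed



definition xx :: "'a::{finite,field} poly \<Rightarrow> real" where
  "xx p = 1 / real CARD('a) ^ degree p"

definition Pz :: "nat \<Rightarrow> ('a::field poly \<times> 'a poly) set" where
  "Pz z = {(a,b). lead_coeff a = 1 \<and> lead_coeff b = 1 \<and> degree a + degree b \<le> z}"

lemma q_ge2: "real CARD('a::{finite,field}) \<ge> 2"
proof -
  have "(0::'a) \<noteq> 1" by simp
  then have "card {0::'a, 1} = 2" by simp
  moreover have "card {0::'a, 1} \<le> CARD('a)" by (rule card_mono) auto
  ultimately show ?thesis by simp
qed

lemma finite_Pz: "finite (Pz z :: ('a::{finite,field} poly \<times> 'a poly) set)"
proof -
  have "Pz z \<subseteq> (Pd (Suc z) \<times> Pd (Suc z) :: ('a poly \<times> 'a poly) set)"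
    by (auto simp: Pz_def Pd_def)
  moreover have "finite (Pd (Suc z) \<times> Pd (Suc z) :: ('a poly \<times> 'a poly) set)"
    using finite_card_Pd by blast
  ultimately show ?thesis by (rule finite_subset)
qed

lemma sum_tri_step: "(\<Sum>j\<le>Suc z. real (Suc z - j) + 1) = (\<Sum>j\<le>z. real (z - j) + 1) + real (z + 2)"
proof -
  have "(\<Sum>j\<le>Suc z. real (Suc z - j) + 1) = (\<Sum>j\<le>z. real (Suc z - j) + 1) + 1" by simp
  also have "(\<Sum>j\<le>z. real (Suc z - j) + 1) = (\<Sum>j\<le>z. (real (z - j) + 1) + 1)"
    by (rule sum.cong) (auto simp: Suc_diff_le)
  also have "\<dots> = (\<Sum>j\<le>z. real (z - j) + 1) + real (z + 1)" by (simp add: sum.distrib)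
  finally show ?thesis by simp
qed

lemma sum_triangle: "(\<Sum>j\<le>z. real (z - j) + 1) = real (z+1) * real (z+2) / 2"
proof (induction z)
  case 0 then show ?case by simp
next
  case (Suc z)
  show ?case unfolding sum_tri_step Suc.IH by (simp add: field_simps)
qed

lemma PS_eq: "(\<Sum>(a,b)\<in>Pz z. xx (a::'a::{finite,field} poly) * xx b) = real (z+1) * real (z+2) / 2"
proof -
  define J where "J = Sigma {..z} (\<lambda>j. {..z-j})"
  have finJ: "finite J" by (simp add: J_def)
  have "(\<Sum>(a,b)\<in>Pz z. xx (a::'a poly) * xx b) = (\<Sum>ab\<in>Pz z. xx (fst ab :: 'a poly) * xx (snd ab))"
    by (simp add: case_prod_beta)
  also have "\<dots> = (\<Sum>jl\<in>J. \<Sum>ab\<in>{ab \<in> (Pz z :: ('a poly \<times> 'a poly) set). (degree (fst ab), degree (snd ab)) = jl}. xx (fst ab) * xx (snd ab))"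
    by (rule sum.group[symmetric]) (use finite_Pz finJ in \<open>auto simp: J_def Pz_def\<close>)
  also have "\<dots> = (\<Sum>jl\<in>J. (1::real))"
  proof (rule sum.cong[OF refl])
    fix jl :: "nat \<times> nat" assume "jl \<in> J"
    obtain j l where jl: "jl = (j,l)" by (cases jl)
    have eq: "{ab \<in> (Pz z :: ('a poly \<times> 'a poly) set). (degree (fst ab), degree (snd ab)) = jl} = (Mon j \<times> Mon l :: ('a poly \<times> 'a poly) set)"
      using \<open>jl \<in> J\<close> by (auto simp: jl J_def Pz_def Mon_def)
    have "(\<Sum>ab\<in>(Mon j \<times> Mon l :: ('a poly \<times> 'a poly) set). xx (fst ab) * xx (snd ab))
        = (\<Sum>ab\<in>(Mon j \<times> Mon l :: ('a poly \<times> 'a poly) set). 1 / real CARD('a) ^ j * (1 / real CARD('a) ^ l))"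
      by (rule sum.cong) (auto simp: xx_def Mon_def)
    also have "\<dots> = 1" using card_Mon[of j, where 'a='a] card_Mon[of l, where 'a='a]
      by (simp add: card_cartesian_product)
    finally show "(\<Sum>ab\<in>{ab \<in> (Pz z :: ('a poly \<times> 'a poly) set). (degree (fst ab), degree (snd ab)) = jl}. xx (fst ab) * xx (snd ab)) = 1"
      using eq by simp
  qed
  also have "\<dots> = (\<Sum>j\<le>z. real (z - j) + 1)" unfolding J_def by (simp add: sum.Sigma[symmetric] add.commute)
  finally show ?thesis using sum_triangle[of z] by simp
qed



lemma real_i:
  fixes w P :: real
  assumes "1 \<le> w" "w < P"
  shows "(1/P) / (1 - 1/P) \<le> (w/P) / (1 - w/P)"
proof -
  have P0: "P > 1" using assms by simp
  have e1: "(1/P) / (1 - 1/P) = 1 / (P - 1)" using P0 by (simp add: field_simps)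
  have e2: "(w/P) / (1 - w/P) = w / (P - w)" using P0 assms by (simp add: field_simps)
  have "1 / (P - 1) \<le> w / (P - w)"
  proof -
    have "(w - 1) * P \<ge> 0" using assms P0 by simp
    then have "1 * (P - w) \<le> w * (P - 1)" by (simp add: algebra_simps)
    then show ?thesis using assms P0 by (simp add: divide_simps)
  qed
  then show ?thesis by (simp only: e1 e2)
qed

lemma aux_D: "(D::real) \<noteq> 0 \<Longrightarrow> 2 * (1 / D) + (1 / D) * (1 / D) = (2 * D + 1) / (D * D)"
  by (simp add: field_simps)

lemma real_ii:
  fixes w P :: real
  assumes "2 \<le> w" "w < P"
  shows "2 * ((1/P) / (1 - 1/P)) + ((1/P) / (1 - 1/P)) * ((1/P) / (1 - 1/P)) \<le> (w/P) / (1 - w/P)"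
proof -
  have P0: "P > 2" using assms by simp
  have e1: "(1/P) / (1 - 1/P) = 1 / (P - 1)" using P0 by (simp add: field_simps)
  have e2: "(w/P) / (1 - w/P) = w / (P - w)" using P0 assms by (simp add: field_simps)
  have D0: "P - 1 \<noteq> 0" using P0 by simp
  have e3: "2 * (1 / (P - 1)) + (1 / (P - 1)) * (1 / (P - 1)) = (2 * (P - 1) + 1) / ((P - 1) * (P - 1))"
    using aux_D[OF D0] .
  have "(2 * (P - 1) + 1) * (P - 2) \<le> 2 * ((P - 1) * (P - 1))" using P0 by (simp add: algebra_simps)
  then have i1: "(2 * (P - 1) + 1) / ((P - 1) * (P - 1)) \<le> 2 / (P - 2)"
    using P0 by (simp add: divide_simps)
  have "(w - 2) * P \<ge> 0" using assms P0 by simp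
  then have "2 * (P - w) \<le> w * (P - 2)" by (simp add: algebra_simps)
  then have i2: "2 / (P - 2) \<le> w / (P - w)" using P0 assms by (simp add: divide_simps)
  show ?thesis unfolding e1 e2 e3 using i1 i2 by linarith
qed

lemma geo_le: 
  fixes x :: real
  assumes "0 \<le> x" "x < 1"
  shows "(\<Sum>i\<le>z. x ^ i) \<le> 1 + x / (1 - x)"
proof -
  have "(1 - x) * (\<Sum>i\<le>z. x ^ i) = 1 - x ^ Suc z"
  proof (induction z)
    case 0 then show ?case by simp
  next
    case (Suc z)
    have "(1 - x) * (\<Sum>i\<le>Suc z. x ^ i) = (1 - x) * (\<Sum>i\<le>z. x ^ i) + (1 - x) * x ^ Suc z"
      by (simp add: algebra_simps)
    also have "\<dots> = 1 - x ^ Suc z + (1 - x) * x ^ Suc z" using Suc.IH by simp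
    also have "\<dots> = 1 - x ^ Suc (Suc z)" by (simp add: algebra_simps)
    finally show ?case .
  qed
  moreover have "x ^ Suc z \<ge> 0" using assms by simp
  ultimately have "(1 - x) * (\<Sum>i\<le>z. x ^ i) \<le> 1" by linarith
  moreover have "1 + x / (1 - x) = 1 / (1 - x)" using assms by (simp add: field_simps)
  ultimately show ?thesis using assms by (simp add: field_simps)
qed

definition Sz :: "nat \<Rightarrow> 'a::field poly set" where
  "Sz z = {p. mirr p \<and> degree p \<le> z}"

lemma finite_Sz: "finite (Sz z :: 'a::{finite,field} poly set)"
proof -
  have "Sz z \<subseteq> (Pd (Suc z) :: 'a poly set)" by (auto simp: Sz_def Pd_def)
  then show ?thesis using finite_card_Pd finite_subset by blast
qed

definition gam :: "'a::{finite,field} poly \<Rightarrow> 'a poly \<Rightarrow> real" where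
  "gam f p = gg f p / (1 - gg f p)"

definition dl :: "'a::{finite,field} poly \<Rightarrow> real" where
  "dl p = xx p / (1 - xx p)"

lemma bad_sub: "mirr p \<Longrightarrow> {0, (-f) mod p} \<subseteq> bad f (p::'a::field poly)"
proof -
  assume m: "mirr p"
  then have p0: "p \<noteq> 0" by (auto simp: mirr_def)
  have "0 \<in> bad f p" by (simp add: bad_def Res_def Pd_def)
  moreover have "(-f) mod p \<in> Res p" using mod_in_Res[OF p0] .
  moreover have "p dvd ((-f) mod p + f)"
  proof -
    have "((-f) mod p + f) mod p = (-f + f) mod p" by (rule mod_add_left_eq)
    then show ?thesis by (simp add: dvd_eq_mod_eq_0)
  qed
  ultimately show ?thesis by (auto simp: bad_def)
qed

lemma card_bad_lower:
  fixes f p :: "'a::{finite,field} poly"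
  assumes "mirr p"
  shows "card (bad f p) \<ge> (if p dvd f then 1 else 2)"
proof -
  have fin: "finite (bad f p)" using finite_Res[of p] by (auto simp: bad_def)
  have "card {0, (-f) mod p} \<le> card (bad f p)" by (rule card_mono[OF fin bad_sub[OF assms]])
  moreover have "\<not> p dvd f \<Longrightarrow> (-f) mod p \<noteq> 0"
    by (auto simp: dvd_eq_mod_eq_0[symmetric])
  ultimately show ?thesis by (cases "p dvd f") auto
qed

lemma card_bad_upper: "card (bad f (p::'a::{finite,field} poly)) \<le> CARD('a) ^ degree p"
  using card_mono[OF finite_Res[of p], of "bad f p"] by (auto simp: bad_def card_Res)

lemma gam_F:
  fixes f p :: "'a::{finite,field} poly"
  assumes "mirr p" "gg f p < 1"
  shows "dl p \<le> gam f p"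
proof -
  define P where "P = real CARD('a) ^ degree p"
  define w where "w = real (card (bad f p))"
  have "w \<ge> 1" using card_bad_lower[OF assms(1), of f] by (auto simp: w_def split: if_splits)
  moreover have "w < P" using assms(2) by (simp add: gg_def w_def P_def)
  ultimately show ?thesis using real_i[of w P] by (simp add: dl_def gam_def gg_def xx_def w_def P_def)
qed

lemma gam_nF:
  fixes f p :: "'a::{finite,field} poly"
  assumes "mirr p" "\<not> p dvd f" "gg f p < 1"
  shows "2 * dl p + dl p * dl p \<le> gam f p"
proof -
  define P where "P = real CARD('a) ^ degree p"
  define w where "w = real (card (bad f p))"
  have "w \<ge> 2" using card_bad_lower[OF assms(1), of f] assms(2) by (auto simp: w_def)
  moreover have "w < P" using assms(3) by (simp add: gg_def w_def P_def)
  ultimately show ?thesis using real_ii[of w P] by (simp add: dl_def gam_def gg_def xx_def w_def P_def)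
qed



lemma xx_pow: "xx (p::'a::{finite,field} poly) = (1 / real CARD('a)) ^ degree p"
  by (simp add: xx_def power_one_over)

lemma xx_fac_D:
  fixes a :: "'a::{finite,field} poly"
  assumes "lead_coeff a = 1" "set_mset (fac a) \<subseteq> D" "finite D" "\<forall>p\<in>D. mirr p"
  shows "xx a = (\<Prod>p\<in>D. xx p ^ count (fac a) p)"
proof -
  have "xx a = (1 / real CARD('a)) ^ (\<Sum>p\<in>D. degree p * count (fac a) p)"
    using degree_fac_D[OF assms] by (simp add: xx_pow mult.commute)
  also have "\<dots> = (\<Prod>p\<in>D. (1 / real CARD('a)) ^ (degree p * count (fac a) p))" by (rule power_sum)
  also have "\<dots> = (\<Prod>p\<in>D. xx p ^ count (fac a) p)" by (simp add: xx_pow power_mult)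
  finally show ?thesis .
qed

lemma fac_mem:
  fixes a :: "'a::field poly"
  assumes "lead_coeff a = 1" "p \<in># fac a"
  shows "mirr p \<and> p dvd a \<and> degree p \<le> degree a"
proof -
  have m: "mirr p" using fac[OF assms(1)] assms(2) by blast
  have d: "p dvd a" using dvd_iff_in_fac[OF assms(1) m] assms(2) by simp
  have "a \<noteq> 0" using assms(1) by auto
  then show ?thesis using m d dvd_imp_degree_le by blast
qed

lemma W_fac_le:
  fixes a :: "'a::field poly"
  assumes "lead_coeff a = 1"
  shows "W (set_mset (fac a)) \<le> degree a"
proof -
  have m: "\<forall>p\<in>set_mset (fac a). mirr p" using fac[OF assms] by blast
  have "W (set_mset (fac a)) = (\<Sum>p\<in>set_mset (fac a). 1 * degree p)" by (simp add: W_def)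
  also have "\<dots> \<le> (\<Sum>p\<in>set_mset (fac a). count (fac a) p * degree p)"
    by (rule sum_mono) (simp add: Suc_le_eq)
  also have "\<dots> = degree a" by (rule degree_fac_D[OF assms, symmetric]) (use m in auto)
  finally show ?thesis .
qed

lemma W_Un_le: "finite A \<Longrightarrow> finite B \<Longrightarrow> W (A \<union> B) \<le> W A + W B"
  unfolding W_def by (simp add: sum_Un_nat)

lemma W_mono: "finite B \<Longrightarrow> A \<subseteq> B \<Longrightarrow> W A \<le> W B"
  unfolding W_def by (rule sum_mono2) auto

definition Fz :: "'a::field poly \<Rightarrow> nat \<Rightarrow> 'a poly set" where
  "Fz f z = {p \<in> Sz z. p dvd f}"

definition Cz :: "nat \<Rightarrow> 'a::field poly set set" where
  "Cz z = {c. c \<subseteq> Sz z \<and> W c \<le> z}"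

definition kap :: "'a::field poly set \<Rightarrow> 'a poly \<times> 'a poly \<Rightarrow> 'a poly set" where
  "kap F ab = set_mset (fac (fst ab)) \<union> (set_mset (fac (snd ab)) - F)"

lemma kap_in_Cz:
  fixes ab :: "'a::{finite,field} poly \<times> 'a poly"
  assumes "ab \<in> Pz z"
  shows "kap F ab \<in> Cz z"
proof -
  obtain a b where ab: "ab = (a,b)" by (cases ab)
  have la: "lead_coeff a = 1" and lb: "lead_coeff b = 1" and dz: "degree a + degree b \<le> z"
    using assms by (auto simp: ab Pz_def)
  have sub: "kap F ab \<subseteq> Sz z"
    using fac_mem[OF la] fac_mem[OF lb] dz by (fastforce simp: kap_def ab Sz_def)
  have "W (kap F ab) \<le> W (set_mset (fac a) \<union> set_mset (fac b))"
    by (rule W_mono) (auto simp: kap_def ab)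
  also have "\<dots> \<le> W (set_mset (fac a)) + W (set_mset (fac b))" by (rule W_Un_le) auto
  also have "\<dots> \<le> degree a + degree b" using W_fac_le[OF la] W_fac_le[OF lb] by simp
  finally show ?thesis using sub dz by (simp add: Cz_def)
qed

definition Tset :: "'a poly set \<Rightarrow> 'a poly set \<Rightarrow> nat \<Rightarrow> 'a poly \<Rightarrow> (nat \<times> nat) set" where
  "Tset F c z p = (if p \<in> F then (if p \<in> c then {1..z} else {0}) \<times> {..z} else ({..z} \<times> {..z}) - {(0,0)})"

lemma finite_Tset: "finite (Tset F c z p)"
  by (simp add: Tset_def)



lemma sum_prod_pow: "(\<Sum>y\<in>A \<times> B. (x::real) ^ (fst y + snd y)) = (\<Sum>i\<in>A. x ^ i) * (\<Sum>j\<in>B. x ^ j)"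
  by (simp add: sum.cartesian_product' sum_product power_add)

lemma xx_bounds:
  fixes p :: "'a::{finite,field} poly"
  assumes "mirr p"
  shows "0 < xx p \<and> xx p \<le> 1/2"
proof -
  have "degree p \<ge> 1" using assms irr_deg by (auto simp: mirr_def)
  then have "real CARD('a) ^ degree p \<ge> real CARD('a) ^ 1"
    using q_ge2[where 'a='a] by (intro power_increasing) auto
  then have "real CARD('a) ^ degree p \<ge> 2" using q_ge2[where 'a='a] by (simp only: power_one_right)
  then show ?thesis by (simp add: xx_def)
qed

lemma tau_bound:
  fixes f p :: "'a::{finite,field} poly"
  assumes m: "mirr p" and g1: "gg f p < 1" and Fiff: "p \<in> F \<longleftrightarrow> p dvd f" and pD: "p \<in> c \<union> F"
  shows "(\<Sum>y\<in>Tset F c z p. xx p ^ (fst y + snd y))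
         \<le> (if p \<in> c then gam f p else 1) * (if p \<in> F then 1 + dl p else 1)"
proof -
  define x where "x = xx p"
  define s where "s = (\<Sum>i\<le>z. x ^ i)"
  have x01: "0 < x" "x \<le> 1/2" using xx_bounds[OF m] by (auto simp: x_def)
  have dlx: "dl p = x / (1 - x)" by (simp add: dl_def x_def)
  have dl0: "dl p \<ge> 0" using x01 dlx by simp
  have sle: "s \<le> 1 + dl p" unfolding s_def dlx by (rule geo_le) (use x01 in auto)
  have s1: "s = 1 + (\<Sum>i\<in>{1..z}. x ^ i)"
  proof -
    have "{..z} = insert 0 {1..z}" by auto
    then show ?thesis unfolding s_def by simp
  qed
  have sge: "s \<ge> 1" using s1 x01 by (simp add: sum_nonneg)
  have gF: "dl p \<le> gam f p" by (rule gam_F[OF m g1])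
  show ?thesis
  proof (cases "p \<in> F")
    case True
    show ?thesis
    proof (cases "p \<in> c")
      case True
      have "(\<Sum>y\<in>Tset F c z p. xx p ^ (fst y + snd y)) = (\<Sum>i\<in>{1..z}. x ^ i) * s"
        using \<open>p \<in> F\<close> True by (simp add: Tset_def sum_prod_pow x_def s_def)
      also have "\<dots> = (s - 1) * s" using s1 by simp
      also have "\<dots> \<le> dl p * (1 + dl p)" using sle sge dl0 by (intro mult_mono) auto
      also have "\<dots> \<le> gam f p * (1 + dl p)" using gF dl0 by (intro mult_right_mono) auto
      finally show ?thesis using True \<open>p \<in> F\<close> by simp
    next
      case False
      have "(\<Sum>y\<in>Tset F c z p. xx p ^ (fst y + snd y)) = s"
        using \<open>p \<in> F\<close> False by (simp add: Tset_def sum_prod_pow x_def s_def)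
      then show ?thesis using sle False \<open>p \<in> F\<close> by simp
    qed
  next
    case False
    then have pc: "p \<in> c" using pD by auto
    have nd: "\<not> p dvd f" using False Fiff by simp
    have "(\<Sum>y\<in>Tset F c z p. xx p ^ (fst y + snd y)) = s * s - 1"
    proof -
      have "(\<Sum>y\<in>Tset F c z p. xx p ^ (fst y + snd y)) = (\<Sum>y\<in>{..z} \<times> {..z}. x ^ (fst y + snd y)) - 1"
        using False by (simp add: Tset_def sum_diff1 x_def)
      then show ?thesis by (simp add: sum_prod_pow s_def)
    qed
    also have "\<dots> \<le> (1 + dl p) * (1 + dl p) - 1" using sle sge by (simp add: mult_mono)
    also have "\<dots> = 2 * dl p + dl p * dl p" by (simp add: algebra_simps)
    also have "\<dots> \<le> gam f p" by (rule gam_nF[OF m nd g1])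
    finally show ?thesis using pc False by simp
  qed
qed



lemma prod_if_sub: "finite U \<Longrightarrow> d \<subseteq> U \<Longrightarrow> (\<Prod>p\<in>U. (if p \<in> d then X p else (1::real))) = (\<Prod>p\<in>d. X p)"
  by (simp add: prod.If_cases Int_absorb1 Int_def[symmetric])

lemma fiber_bound:
  fixes f :: "'a::{finite,field} poly"
  assumes c: "c \<in> Cz z" and F: "F = Fz f z" and g1: "\<forall>p\<in>Sz z. gg f p < 1"
  shows "(\<Sum>ab\<in>{ab\<in>Pz z. kap F ab = c}. xx (fst ab) * xx (snd ab)) \<le> (\<Prod>p\<in>c. gam f p) * (\<Prod>p\<in>F. 1 + dl p)"
proof -
  define D where "D = c \<union> F"
  define Fib where "Fib = {ab\<in>Pz z. kap F ab = c}"
  define \<Phi> where "\<Phi> = (\<lambda>ab. restrict (\<lambda>p. (count (fac (fst ab)) p, count (fac (snd ab)) p)) D)"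
  define G where "G = (\<lambda>e. \<Prod>p\<in>D. xx p ^ (fst (e p) + snd (e p)))"
  have cS: "c \<subseteq> Sz z" using c by (simp add: Cz_def)
  have FS: "F \<subseteq> Sz z" using F by (auto simp: Fz_def)
  have DS: "D \<subseteq> Sz z" using cS FS by (simp add: D_def)
  have finD: "finite D" using DS finite_Sz finite_subset by blast
  have finF: "finite F" using FS finite_Sz finite_subset by blast
  have finc: "finite c" using cS finite_Sz finite_subset by blast
  have mD: "\<forall>p\<in>D. mirr p" using DS by (auto simp: Sz_def)
  have Fib_props: "lead_coeff (fst ab) = 1 \<and> lead_coeff (snd ab) = 1 \<and> degree (fst ab) \<le> z \<and> degree (snd ab) \<le> z
      \<and> set_mset (fac (fst ab)) \<subseteq> D \<and> set_mset (fac (snd ab)) \<subseteq> D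
      \<and> set_mset (fac (fst ab)) \<union> (set_mset (fac (snd ab)) - F) = c" if "ab \<in> Fib" for ab
    using that by (auto simp: Fib_def Pz_def kap_def D_def)
  have wt: "xx (fst ab) * xx (snd ab) = G (\<Phi> ab)" if "ab \<in> Fib" for ab
  proof -
    have "xx (fst ab) = (\<Prod>p\<in>D. xx p ^ count (fac (fst ab)) p)"
      using Fib_props[OF that] by (intro xx_fac_D) (use finD mD in auto)
    moreover have "xx (snd ab) = (\<Prod>p\<in>D. xx p ^ count (fac (snd ab)) p)"
      using Fib_props[OF that] by (intro xx_fac_D) (use finD mD in auto)
    ultimately show ?thesis by (simp add: G_def \<Phi>_def prod.distrib[symmetric] power_add)
  qed
  have inj: "inj_on \<Phi> Fib"
  proof (rule inj_onI)
    fix ab ab' assume ab: "ab \<in> Fib" and ab': "ab' \<in> Fib" and eq: "\<Phi> ab = \<Phi> ab'"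
    have ce: "count (fac (fst ab)) p = count (fac (fst ab')) p \<and> count (fac (snd ab)) p = count (fac (snd ab')) p"
      if "p \<in> D" for p
    proof -
      have "\<Phi> ab p = \<Phi> ab' p" using eq by simp
      then show ?thesis using that by (simp add: \<Phi>_def)
    qed
    have "fst ab = (\<Prod>p\<in>D. p ^ count (fac (fst ab)) p)"
      using Fib_props[OF ab] finD by (intro fac_prod_D) auto
    also have "\<dots> = (\<Prod>p\<in>D. p ^ count (fac (fst ab')) p)" using ce by (intro prod.cong) auto
    also have "\<dots> = fst ab'" using Fib_props[OF ab'] finD by (intro fac_prod_D[symmetric]) auto
    finally have 1: "fst ab = fst ab'" .
    have "snd ab = (\<Prod>p\<in>D. p ^ count (fac (snd ab)) p)"
      using Fib_props[OF ab] finD by (intro fac_prod_D) auto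
    also have "\<dots> = (\<Prod>p\<in>D. p ^ count (fac (snd ab')) p)" using ce by (intro prod.cong) auto
    also have "\<dots> = snd ab'" using Fib_props[OF ab'] finD by (intro fac_prod_D[symmetric]) auto
    finally have 2: "snd ab = snd ab'" .
    show "ab = ab'" using 1 2 by (simp add: prod_eq_iff)
  qed
  have img: "\<Phi> ` Fib \<subseteq> PiE D (Tset F c z)"
  proof
    fix e assume "e \<in> \<Phi> ` Fib"
    then obtain ab where ab: "ab \<in> Fib" and e: "e = \<Phi> ab" by blast
    have P: "lead_coeff (fst ab) = 1 \<and> lead_coeff (snd ab) = 1 \<and> degree (fst ab) \<le> z \<and> degree (snd ab) \<le> z
      \<and> set_mset (fac (fst ab)) \<union> (set_mset (fac (snd ab)) - F) = c" using Fib_props[OF ab] by blast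
    have le1: "count (fac (fst ab)) p \<le> z" for p
      using count_fac_le[of "fst ab" p] P by linarith
    have le2: "count (fac (snd ab)) p \<le> z" for p
      using count_fac_le[of "snd ab" p] P by linarith
    have "(count (fac (fst ab)) p, count (fac (snd ab)) p) \<in> Tset F c z p" if "p \<in> D" for p
    proof (cases "p \<in> F")
      case True
      show ?thesis
      proof (cases "p \<in> c")
        case True
        then have "p \<in># fac (fst ab)" using P \<open>p \<in> F\<close> by blast
        then have "count (fac (fst ab)) p \<ge> 1" by (simp add: Suc_le_eq)
        then show ?thesis using \<open>p \<in> F\<close> True le1 le2 by (simp add: Tset_def)
      next
        case False
        then have "p \<notin># fac (fst ab)" using P by blast
        then have "count (fac (fst ab)) p = 0" by (simp add: not_in_iff)
        then show ?thesis using \<open>p \<in> F\<close> False le2 by (simp add: Tset_def)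
      qed
    next
      case False
      then have "p \<in> c" using that by (simp add: D_def)
      then have "p \<in># fac (fst ab) \<or> p \<in># fac (snd ab)" using P by blast
      then have "count (fac (fst ab)) p \<noteq> 0 \<or> count (fac (snd ab)) p \<noteq> 0" by auto
      then show ?thesis using False le1 le2 by (auto simp: Tset_def)
    qed
    then show "e \<in> PiE D (Tset F c z)" unfolding e \<Phi>_def by (simp add: restrict_PiE_iff)
  qed
  have Gnn: "G e \<ge> 0" for e
    unfolding G_def by (intro prod_nonneg) (simp add: xx_def)
  have "(\<Sum>ab\<in>Fib. xx (fst ab) * xx (snd ab)) = (\<Sum>ab\<in>Fib. G (\<Phi> ab))"
    using wt by (intro sum.cong) auto
  also have "\<dots> = (\<Sum>e\<in>\<Phi> ` Fib. G e)" by (simp add: sum.reindex[OF inj])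
  also have "\<dots> \<le> (\<Sum>e\<in>PiE D (Tset F c z). G e)"
  proof (rule sum_mono2)
    show "finite (PiE D (Tset F c z))" using finD finite_Tset by (intro finite_PiE) auto
  qed (use img Gnn in auto)
  also have "\<dots> = (\<Prod>p\<in>D. \<Sum>y\<in>Tset F c z p. xx p ^ (fst y + snd y))"
    unfolding G_def by (rule prod_sum_PiE[symmetric]) (use finD finite_Tset in auto)
  also have "\<dots> \<le> (\<Prod>p\<in>D. (if p \<in> c then gam f p else 1) * (if p \<in> F then 1 + dl p else 1))"
  proof (rule prod_mono)
    fix p assume pD: "p \<in> D"
    have m: "mirr p" using mD pD by blast
    have "0 \<le> (\<Sum>y\<in>Tset F c z p. xx p ^ (fst y + snd y))"
      using xx_bounds[OF m] by (intro sum_nonneg) auto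
    moreover have "(\<Sum>y\<in>Tset F c z p. xx p ^ (fst y + snd y)) \<le> (if p \<in> c then gam f p else 1) * (if p \<in> F then 1 + dl p else 1)"
    proof (rule tau_bound[OF m])
      show "gg f p < 1" using g1 DS pD by blast
      show "(p \<in> F) = (p dvd f)" using F DS pD by (auto simp: Fz_def)
      show "p \<in> c \<union> F" using pD by (simp add: D_def)
    qed
    ultimately show "0 \<le> (\<Sum>y\<in>Tset F c z p. xx p ^ (fst y + snd y)) \<and> (\<Sum>y\<in>Tset F c z p. xx p ^ (fst y + snd y)) \<le> (if p \<in> c then gam f p else 1) * (if p \<in> F then 1 + dl p else 1)"
      by blast
  qed
  also have "\<dots> = (\<Prod>p\<in>D. if p \<in> c then gam f p else 1) * (\<Prod>p\<in>D. if p \<in> F then 1 + dl p else 1)"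
    by (rule prod.distrib)
  also have "\<dots> = (\<Prod>p\<in>c. gam f p) * (\<Prod>p\<in>F. 1 + dl p)"
    using prod_if_sub[OF finD, of c "gam f"] prod_if_sub[OF finD, of F "\<lambda>p. 1 + dl p"] by (simp add: D_def)
  finally show ?thesis unfolding Fib_def .
qed



lemma prod_mset_sum_rep:
  "finite F \<Longrightarrow> prod_mset (\<Sum>p\<in>F. replicate_mset (e p) p) = (\<Prod>p\<in>F. (p::'a::comm_monoid_mult) ^ e p)"
  by (induction F rule: finite_induct) (simp_all add: prod_mset_replicate_mset)

lemma count_sum_rep':
  "finite F \<Longrightarrow> count (\<Sum>q\<in>F. replicate_mset (e q) q) p = (if p \<in> F then e p else 0)"
proof -
  assume "finite F"
  have "count (\<Sum>q\<in>F. replicate_mset (e q) q) p = (\<Sum>q\<in>F. if p = q then e q else 0)"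
    by (simp add: count_sum)
  also have "\<dots> = (if p \<in> F then e p else 0)" using \<open>finite F\<close> by (simp add: sum.delta')
  finally show ?thesis .
qed

lemma count_sum_rep:
  "finite F \<Longrightarrow> p \<in> F \<Longrightarrow> count (\<Sum>q\<in>F. replicate_mset (e q) q) p = e p"
  by (simp add: count_sum_rep')

lemma in_sum_rep: "finite F \<Longrightarrow> q \<in># (\<Sum>p\<in>F. replicate_mset (e p) p) \<Longrightarrow> q \<in> F"
proof (rule ccontr)
  assume fin: "finite F" and mem: "q \<in># (\<Sum>p\<in>F. replicate_mset (e p) p)" and nq: "q \<notin> F"
  have "count (\<Sum>p\<in>F. replicate_mset (e p) p) q = 0" using nq by (simp add: count_sum_rep'[OF fin])
  then show False using mem by (simp add: not_in_iff[symmetric])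
qed

lemma Mon_disj: "i \<noteq> j \<Longrightarrow> Mon i \<inter> Mon j = {}"
  by (auto simp: Mon_def)

lemma psi_inj:
  fixes F :: "'a::field poly set"
  assumes "finite F" "\<forall>p\<in>F. mirr p" "(\<Prod>p\<in>F. p ^ e p) = (\<Prod>p\<in>F. p ^ e' p)" "p \<in> F"
  shows "e p = e' p"
proof -
  define A where "A = (\<Sum>q\<in>F. replicate_mset (e q) q)"
  define A' where "A' = (\<Sum>q\<in>F. replicate_mset (e' q) q)"
  have mA: "\<forall>q\<in>#A. mirr q" using assms(2) in_sum_rep[OF assms(1)] by (auto simp: A_def)
  have mA': "\<forall>q\<in>#A'. mirr q" using assms(2) in_sum_rep[OF assms(1)] by (auto simp: A'_def)
  have "prod_mset A = prod_mset A'"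
    using assms(3) prod_mset_sum_rep[OF assms(1)] by (simp add: A_def A'_def)
  then have "A = A'" using fac_unique[OF mA mA'] by blast
  then show ?thesis using count_sum_rep[OF assms(1,4), of e] count_sum_rep[OF assms(1,4), of e']
    by (simp add: A_def A'_def)
qed

lemma sum_monic_le:
  "(\<Sum>m\<in>(\<Union>d\<le>N. Mon d :: 'a::{finite,field} poly set). xx m * xx m) \<le> 1 / (1 - 1 / real CARD('a))"
proof -
  define x where "x = 1 / real CARD('a)"
  have x01: "0 \<le> x" "x < 1" using q_ge2[where 'a='a] by (auto simp: x_def)
  have "(\<Sum>m\<in>(\<Union>d\<le>N. Mon d :: 'a poly set). xx m * xx m) = (\<Sum>d\<le>N. \<Sum>m\<in>(Mon d :: 'a poly set). xx m * xx m)"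
    by (rule sum.UNION_disjoint) (use finite_Mon Mon_disj in auto)
  also have "\<dots> = (\<Sum>d\<le>N. x ^ d)"
  proof (rule sum.cong[OF refl])
    fix d
    have "(\<Sum>m\<in>(Mon d :: 'a poly set). xx m * xx m) = (\<Sum>m\<in>(Mon d :: 'a poly set). x ^ d * x ^ d)"
      by (rule sum.cong) (auto simp: Mon_def xx_pow x_def)
    also have "\<dots> = real CARD('a) ^ d * (x ^ d * x ^ d)" by (simp add: card_Mon)
    also have "\<dots> = x ^ d" using q_ge2[where 'a='a] by (simp add: x_def power_one_over)
    finally show "(\<Sum>m\<in>(Mon d :: 'a poly set). xx m * xx m) = x ^ d" .
  qed
  also have "\<dots> \<le> 1 + x / (1 - x)" by (rule geo_le[OF x01])
  also have "\<dots> = 1 / (1 - x)" using x01 by (simp add: field_simps)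
  finally show ?thesis by (simp add: x_def)
qed

lemma euler_trunc:
  fixes F :: "'a::{finite,field} poly set"
  assumes finF: "finite F" and mF: "\<forall>p\<in>F. mirr p"
  shows "(\<Prod>p\<in>F. \<Sum>k<K. (xx p * xx p) ^ k) \<le> 1 / (1 - 1 / real CARD('a))"
proof -
  define \<psi> where "\<psi> = (\<lambda>e. \<Prod>p\<in>F. p ^ e p)"
  define N where "N = K * W F"
  have p0: "p \<noteq> 0" if "p \<in> F" for p using mF that by (auto simp: mirr_def)
  have deg\<psi>: "degree (\<psi> e) = (\<Sum>p\<in>F. e p * degree p)" for e
  proof -
    have "degree (\<psi> e) = (\<Sum>p\<in>F. degree (p ^ e p))" unfolding \<psi>_def
      by (rule degree_prod_sum_eq) (use p0 in auto)
    also have "\<dots> = (\<Sum>p\<in>F. e p * degree p)" using p0 by (intro sum.cong) (auto simp: degree_power_eq)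
    finally show ?thesis .
  qed
  have wt: "(\<Prod>p\<in>F. (xx p * xx p) ^ e p) = xx (\<psi> e) * xx (\<psi> e)" for e
  proof -
    have "xx (\<psi> e) = (1 / real CARD('a)) ^ (\<Sum>p\<in>F. degree p * e p)" by (simp add: xx_pow deg\<psi> mult.commute)
    also have "\<dots> = (\<Prod>p\<in>F. (1 / real CARD('a)) ^ (degree p * e p))" by (rule power_sum)
    also have "\<dots> = (\<Prod>p\<in>F. xx p ^ e p)" by (simp add: xx_pow power_mult)
    finally show ?thesis by (simp add: prod.distrib[symmetric] power_mult_distrib)
  qed
  have inj: "inj_on \<psi> (PiE F (\<lambda>_. {..<K}))"
  proof (rule inj_onI)
    fix e e' assume e: "e \<in> PiE F (\<lambda>_. {..<K})" and e': "e' \<in> PiE F (\<lambda>_. {..<K})" and eq: "\<psi> e = \<psi> e'"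
    show "e = e'"
    proof (rule PiE_ext[OF e e'])
      fix p assume "p \<in> F"
      then show "e p = e' p" using psi_inj[OF finF mF] eq by (simp add: \<psi>_def)
    qed
  qed
  have img: "\<psi> ` PiE F (\<lambda>_. {..<K}) \<subseteq> (\<Union>d\<le>N. Mon d)"
  proof
    fix m assume "m \<in> \<psi> ` PiE F (\<lambda>_. {..<K})"
    then obtain e where e: "e \<in> PiE F (\<lambda>_. {..<K})" and m: "m = \<psi> e" by blast
    have "lead_coeff m = 1" unfolding m \<psi>_def using mF by (simp add: lead_coeff_prod lead_coeff_power mirr_def)
    moreover have "degree m \<le> N"
    proof -
      have "degree m = (\<Sum>p\<in>F. e p * degree p)" using deg\<psi> m by simp
      also have "\<dots> \<le> (\<Sum>p\<in>F. K * degree p)" using e by (intro sum_mono mult_le_mono1) (auto simp: PiE_def Pi_def less_imp_le)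
      also have "\<dots> = N" by (simp add: N_def W_def sum_distrib_left)
      finally show ?thesis .
    qed
    ultimately show "m \<in> (\<Union>d\<le>N. Mon d)" by (auto simp: Mon_def)
  qed
  have "(\<Prod>p\<in>F. \<Sum>k<K. (xx p * xx p) ^ k) = (\<Sum>e\<in>PiE F (\<lambda>_. {..<K}). \<Prod>p\<in>F. (xx p * xx p) ^ e p)"
    by (rule prod_sum_PiE) (use finF in auto)
  also have "\<dots> = (\<Sum>e\<in>PiE F (\<lambda>_. {..<K}). xx (\<psi> e) * xx (\<psi> e))" using wt by simp
  also have "\<dots> = (\<Sum>m\<in>\<psi> ` PiE F (\<lambda>_. {..<K}). xx m * xx m)" by (simp add: sum.reindex[OF inj])
  also have "\<dots> \<le> (\<Sum>m\<in>(\<Union>d\<le>N. Mon d :: 'a poly set). xx m * xx m)"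
    by (rule sum_mono2) (use img in \<open>auto simp: finite_Mon\<close>)
  also have "\<dots> \<le> 1 / (1 - 1 / real CARD('a))" by (rule sum_monic_le)
  finally show ?thesis .
qed



lemma euler_bound:
  fixes F :: "'a::{finite,field} poly set"
  assumes finF: "finite F" and mF: "\<forall>p\<in>F. mirr p"
  shows "1 - 1 / real CARD('a) \<le> (\<Prod>p\<in>F. 1 - xx p * xx p)"
proof -
  define y where "y = (\<lambda>p::'a poly. xx p * xx p)"
  define c where "c = 1 - 1 / real CARD('a)"
  have c0: "c > 0" using q_ge2[where 'a='a] by (simp add: c_def)
  have y01: "0 < y p \<and> y p < 1" if "p \<in> F" for p
  proof -
    have "0 < xx p \<and> xx p \<le> 1/2" using xx_bounds mF that by blast
    then have "xx p * xx p \<le> (1/2) * (1/2)" by (intro mult_mono) auto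
    then show ?thesis using \<open>0 < xx p \<and> xx p \<le> 1/2\<close> by (simp add: y_def)
  qed
  have B0: "(\<Prod>p\<in>F. 1 - y p) > 0" using y01 by (intro prod_pos) auto
  have bound: "c * (\<Prod>p\<in>F. 1 - y p ^ K) \<le> (\<Prod>p\<in>F. 1 - y p)" for K
  proof -
    have "(\<Prod>p\<in>F. \<Sum>k<K. y p ^ k) = (\<Prod>p\<in>F. (1 - y p ^ K) / (1 - y p))"
    proof (rule prod.cong[OF refl])
      fix p assume "p \<in> F"
      then have "y p \<noteq> 1" using y01 by force
      then show "(\<Sum>k<K. y p ^ k) = (1 - y p ^ K) / (1 - y p)" by (simp add: sum_gp_strict)
    qed
    also have "\<dots> = (\<Prod>p\<in>F. 1 - y p ^ K) / (\<Prod>p\<in>F. 1 - y p)" by (rule prod_dividef)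
    finally have "(\<Prod>p\<in>F. 1 - y p ^ K) / (\<Prod>p\<in>F. 1 - y p) \<le> 1 / c"
      using euler_trunc[OF finF mF, of K] by (simp add: y_def c_def)
    then show ?thesis using B0 c0 by (simp add: divide_simps mult.commute)
  qed
  have lim: "(\<lambda>K. c * (\<Prod>p\<in>F. 1 - y p ^ K)) \<longlonglongrightarrow> c * (\<Prod>p\<in>F. 1 - 0)"
  proof (intro tendsto_mult_left tendsto_prod tendsto_diff tendsto_const)
    fix p assume "p \<in> F"
    then have "0 < y p \<and> y p < 1" using y01 by blast
    then show "(\<lambda>K. y p ^ K) \<longlonglongrightarrow> 0" by (intro LIMSEQ_power_zero) auto
  qed
  have "c * (\<Prod>p\<in>F. 1 - 0) \<le> (\<Prod>p\<in>F. 1 - y p)"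
    by (rule LIMSEQ_le_const2[OF lim]) (use bound in auto)
  then show ?thesis by (simp add: c_def y_def)
qed

lemma finite_Ef: "f \<noteq> 0 \<Longrightarrow> finite {p. lead_coeff p = 1 \<and> irreducible p \<and> p dvd (f::'a::{finite,field} poly)}"
proof -
  assume f0: "f \<noteq> 0"
  have "{p. lead_coeff p = 1 \<and> irreducible p \<and> p dvd f} \<subseteq> (Pd (Suc (degree f)) :: 'a poly set)"
    using f0 by (auto simp: Pd_def dest: dvd_imp_degree_le)
  then show ?thesis using finite_card_Pd finite_subset by blast
qed

lemma K_bound:
  fixes f :: "'a::{finite,field} poly"
  assumes f0: "f \<noteq> 0"
  shows "(\<Prod>p\<in>Fz f z. 1 + dl p) \<le> E_fun f / (1 - 1 / real CARD('a))"
proof -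
  define F where "F = Fz f z"
  define Ef where "Ef = {p. lead_coeff p = 1 \<and> irreducible p \<and> p dvd f}"
  have FS: "F \<subseteq> Sz z" by (auto simp: F_def Fz_def)
  have finF: "finite F" using FS finite_Sz finite_subset by blast
  have mF: "\<forall>p\<in>F. mirr p" using FS by (auto simp: Sz_def)
  have xb: "0 < xx p \<and> xx p \<le> 1/2" if "p \<in> F" for p using xx_bounds mF that by blast
  have "(\<Prod>p\<in>F. 1 + dl p) = (\<Prod>p\<in>F. (1 + xx p) / (1 - xx p * xx p))"
  proof (rule prod.cong[OF refl])
    fix p assume "p \<in> F"
    then have x: "0 < xx p" "xx p < 1" using xb by force+
    have e: "1 - xx p * xx p = (1 - xx p) * (1 + xx p)" by (simp add: algebra_simps)
    have n1: "1 - xx p \<noteq> 0" "1 + xx p \<noteq> 0" using x by auto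
    have "(1 + xx p) / (1 - xx p * xx p) = 1 / (1 - xx p)" unfolding e using n1 by simp
    also have "\<dots> = 1 + dl p" using n1 by (simp add: dl_def field_simps)
    finally show "1 + dl p = (1 + xx p) / (1 - xx p * xx p)" by simp
  qed
  also have "\<dots> = (\<Prod>p\<in>F. 1 + xx p) / (\<Prod>p\<in>F. 1 - xx p * xx p)" by (rule prod_dividef)
  also have "\<dots> \<le> E_fun f / (1 - 1 / real CARD('a))"
  proof (rule frac_le)
    have sub: "F \<subseteq> Ef" by (auto simp: F_def Fz_def Ef_def Sz_def mirr_def)
    have "(\<Prod>p\<in>F. 1 + xx p) \<le> (\<Prod>p\<in>Ef. 1 + xx p)"
      by (rule prod_mono2) (use finite_Ef[OF f0] sub in \<open>auto simp: Ef_def xx_def\<close>)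
    also have "\<dots> = E_fun f" by (simp add: E_fun_def Ef_def xx_def poly_abs_def)
    finally show "(\<Prod>p\<in>F. 1 + xx p) \<le> E_fun f" .
    show "0 \<le> E_fun f" unfolding E_fun_def by (intro prod_nonneg) (simp add: poly_abs_def)
    show "0 < 1 - 1 / real CARD('a)" using q_ge2[where 'a='a] by simp
    show "1 - 1 / real CARD('a) \<le> (\<Prod>p\<in>F. 1 - xx p * xx p)" by (rule euler_bound[OF finF mF])
  qed
  finally show ?thesis by (simp add: F_def)
qed



lemma finite_Cz: "finite (Cz z :: 'a::{finite,field} poly set set)"
proof -
  have "Cz z \<subseteq> Pow (Sz z :: 'a poly set)" by (auto simp: Cz_def)
  then show ?thesis using finite_Sz by (meson finite_Pow_iff finite_subset)
qed

lemma PS_le: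
  fixes f :: "'a::{finite,field} poly"
  assumes g1: "\<forall>p\<in>Sz z. gg f p < 1"
  shows "(\<Sum>ab\<in>Pz z. xx (fst ab :: 'a poly) * xx (snd ab))
         \<le> (\<Sum>c\<in>Cz z. \<Prod>p\<in>c. gam f p) * (\<Prod>p\<in>Fz f z. 1 + dl p)"
proof -
  define F where "F = Fz f z"
  have "(\<Sum>ab\<in>Pz z. xx (fst ab :: 'a poly) * xx (snd ab))
      = (\<Sum>c\<in>Cz z. \<Sum>ab\<in>{ab\<in>Pz z. kap F ab = c}. xx (fst ab) * xx (snd ab))"
    by (rule sum.group[symmetric]) (use finite_Pz finite_Cz kap_in_Cz in auto)
  also have "\<dots> \<le> (\<Sum>c\<in>Cz z. (\<Prod>p\<in>c. gam f p) * (\<Prod>p\<in>F. 1 + dl p))"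
    by (rule sum_mono) (rule fiber_bound, auto simp: F_def g1)
  finally show ?thesis by (simp add: F_def sum_distrib_right)
qed

lemma G_lower:
  fixes f :: "'a::{finite,field} poly"
  assumes f0: "f \<noteq> 0" and g1: "\<forall>p\<in>Sz z. gg f p < 1"
  shows "real (z+1) * real (z+2) / 2 * (1 - 1 / real CARD('a)) \<le> (\<Sum>c\<in>Cz z. \<Prod>p\<in>c. gam f p) * E_fun f"
proof -
  define G where "G = (\<Sum>c\<in>Cz z. \<Prod>p\<in>c. gam f p)"
  define c where "c = 1 - 1 / real CARD('a)"
  have c0: "c > 0" using q_ge2[where 'a='a] by (simp add: c_def)
  have gam0: "gam f p \<ge> 0" if "p \<in> Sz z" for p
  proof -
    have "gg f p \<ge> 0" by (simp add: gg_def)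
    moreover have "1 - gg f p > 0" using g1 that by simp
    ultimately show ?thesis unfolding gam_def by (rule divide_nonneg_pos)
  qed
  have G0: "G \<ge> 0" unfolding G_def
    by (intro sum_nonneg prod_nonneg) (use gam0 in \<open>auto simp: Cz_def\<close>)
  have "real (z+1) * real (z+2) / 2 = (\<Sum>ab\<in>Pz z. xx (fst ab :: 'a poly) * xx (snd ab))"
    using PS_eq[of z, where 'a='a] by (simp add: case_prod_beta)
  also have "\<dots> \<le> G * (\<Prod>p\<in>Fz f z. 1 + dl p)" unfolding G_def by (rule PS_le[OF g1])
  also have "\<dots> \<le> G * (E_fun f / c)" unfolding c_def using K_bound[OF f0, of z] G0 by (intro mult_left_mono) auto
  finally have "real (z+1) * real (z+2) / 2 \<le> G * E_fun f / c" by simp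
  then have "real (z+1) * real (z+2) / 2 * c \<le> G * E_fun f / c * c" using c0 by (intro mult_right_mono) auto
  also have "\<dots> = G * E_fun f" using c0 by simp
  finally show ?thesis unfolding G_def c_def .
qed



definition Aset :: "'a::field poly \<Rightarrow> nat \<Rightarrow> 'a poly set" where
  "Aset f n = {h. lead_coeff h = 1 \<and> irreducible h \<and> degree h = n \<and>
                          lead_coeff (h + f) = 1 \<and> irreducible (h + f) \<and> degree (h + f) = n}"

lemma not_dvd_Aset:
  fixes f h p :: "'a::field poly"
  assumes h: "h \<in> Aset f n" and p: "mirr p" and dp: "degree p < n"
  shows "\<not> p dvd h * (h + f)"
proof
  assume "p dvd h * (h + f)"
  then have "p dvd h \<or> p dvd (h + f)" using irreducible_euclid p by (auto simp: mirr_def)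
  moreover have "\<not> p dvd h" using irr_dvd_small[of h p] h p dp by (auto simp: Aset_def mirr_def)
  moreover have "\<not> p dvd (h + f)" using irr_dvd_small[of "h + f" p] h p dp by (auto simp: Aset_def mirr_def)
  ultimately show False by blast
qed

lemma nat_sq_bound: "(n::nat) * n \<le> 4 * ((n div 2 + 1) * (n div 2 + 2))"
proof -
  define z where "z = n div 2"
  have "n \<le> 2 * (z + 1)" by (simp add: z_def)
  then have "n * n \<le> (2 * (z + 1)) * (2 * (z + 1))" by (intro mult_le_mono) auto
  also have "\<dots> \<le> 4 * ((z + 1) * (z + 2))" by simp
  finally show ?thesis by (simp add: z_def)
qed

lemma real_final:
  fixes A X c B N :: real
  assumes "A * X * c \<le> B" "N / 8 \<le> X" "N > 0" "c > 0" "A \<ge> 0"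
  shows "A \<le> 8 * B / (N * c)"
proof -
  have "A * (N / 8) * c \<le> A * X * c" using assms by (intro mult_right_mono mult_left_mono) auto
  then have "A * (N / 8) * c \<le> B" using assms(1) by linarith
  then show ?thesis using assms by (simp add: field_simps)
qed

lemma main_A:
  fixes f :: "'a::{finite,field} poly" and n :: nat
  assumes n1: "n \<ge> 1" and f0: "f \<noteq> 0" and df: "degree f < n"
  shows "real (A_count f n) \<le> 8 * real CARD('a) ^ n / (real n ^ 2 * (1 - 1 / real CARD('a))) * E_fun f"
proof -
  define z where "z = n div 2"
  define S where "S = (Sz z :: 'a poly set)"
  have Ac: "A_count f n = card (Aset f n)" by (simp add: A_count_def Aset_def)
  have dS: "degree p < n" if "p \<in> S" for p using that n1 by (auto simp: S_def Sz_def z_def)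
  have mS: "\<forall>p\<in>S. mirr p" by (auto simp: S_def Sz_def)
  have E0: "E_fun f \<ge> 0" unfolding E_fun_def by (intro prod_nonneg) (simp add: poly_abs_def)
  have q1: "1 - 1 / real CARD('a) > 0" using q_ge2[where 'a='a] by simp
  show ?thesis
  proof (cases "\<forall>p\<in>S. gg f p < 1")
    case False
    then obtain p where pS: "p \<in> S" and gp: "gg f p \<ge> 1" by force
    have m: "mirr p" using pS mS by blast
    have p0: "p \<noteq> 0" using m by (auto simp: mirr_def)
    have "card (bad f p) \<ge> card (Res p)"
      using gp by (simp add: gg_def card_Res divide_simps)
    moreover have "bad f p \<subseteq> Res p" by (auto simp: bad_def)
    ultimately have bR: "bad f p = Res p" using card_subset_eq[OF finite_Res] by (metis le_antisym card_mono finite_Res)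
    have "Aset f n = {}"
    proof (rule ccontr)
      assume "Aset f n \<noteq> {}"
      then obtain h where h: "h \<in> Aset f n" by blast
      have "h mod p \<in> bad f p" using bR mod_in_Res[OF p0] by simp
      then have "bb f p (h mod p) = 1" by (simp add: bad_def bb_def)
      then have "bb f p h = 1" using bb_mod[of f p h] by simp
      then have "p dvd h * (h + f)" by (simp add: bb_def split: if_splits)
      then show False using not_dvd_Aset[OF h m dS[OF pS]] by blast
    qed
    then show ?thesis using Ac E0 q1 by simp
  next
    case True
    have g01: "\<forall>p\<in>S. 0 < gg f p \<and> gg f p < 1"
    proof
      fix p assume "p \<in> S"
      have "card (bad f p) \<ge> 1" using card_bad_lower[of p f] mS \<open>p \<in> S\<close> by (auto split: if_splits)
      then show "0 < gg f p \<and> gg f p < 1" using True \<open>p \<in> S\<close> by (simp add: gg_def)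
    qed
    define T where "T = {h \<in> Mon n. \<forall>p\<in>S. bb f p h = 0}"
    define G where "G = (\<Sum>c\<in>(Cz z :: 'a poly set set). \<Prod>p\<in>c. gg f p / (1 - gg f p))"
    have CW: "\<forall>c\<in>(Cz z :: 'a poly set set). \<forall>c'\<in>Cz z. W (c \<union> c') \<le> n"
    proof (intro ballI)
      fix c c' :: "'a poly set" assume c: "c \<in> Cz z" and c': "c' \<in> Cz z"
      have "finite c" "finite c'" using c c' finite_Sz finite_subset by (auto simp: Cz_def)
      then have "W (c \<union> c') \<le> W c + W c'" by (rule W_Un_le)
      also have "\<dots> \<le> z + z" using c c' by (auto simp: Cz_def)
      also have "\<dots> \<le> n" by (simp add: z_def)
      finally show "W (c \<union> c') \<le> n" .
    qed
    have sv: "real (card T) * G \<le> real CARD('a) ^ n"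
      unfolding T_def G_def
      by (rule sieve[where S=S]) (use finite_Sz mS g01 CW in \<open>auto simp: S_def Cz_def W_def\<close>)
    have AT: "Aset f n \<subseteq> T"
    proof
      fix h assume h: "h \<in> Aset f n"
      have "h \<in> Mon n" using h by (auto simp: Aset_def Mon_def)
      moreover have "bb f p h = 0" if "p \<in> S" for p
        using not_dvd_Aset[OF h _ dS[OF that]] mS that by (auto simp: bb_def)
      ultimately show "h \<in> T" by (auto simp: T_def)
    qed
    have cAT: "card (Aset f n) \<le> card T"
      by (rule card_mono[OF _ AT]) (auto simp: T_def finite_Mon)
    have GL: "real (z+1) * real (z+2) / 2 * (1 - 1 / real CARD('a)) \<le> G * E_fun f"
      using G_lower[OF f0, of z] True by (simp add: G_def gam_def S_def)
    have G0: "G \<ge> 0"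
    proof -
      have "0 \<le> gg f p / (1 - gg f p)" if "p \<in> S" for p
        using g01 that by (intro divide_nonneg_pos) auto
      then show ?thesis unfolding G_def by (intro sum_nonneg prod_nonneg) (auto simp: Cz_def S_def)
    qed
    have "real (card (Aset f n)) * (real (z+1) * real (z+2) / 2) * (1 - 1 / real CARD('a))
         \<le> real (card (Aset f n)) * (G * E_fun f)"
      using GL by (simp add: mult.assoc mult_left_mono)
    also have "\<dots> \<le> real (card T) * (G * E_fun f)"
      using cAT G0 E0 by (intro mult_right_mono) auto
    also have "\<dots> = (real (card T) * G) * E_fun f" by simp
    also have "\<dots> \<le> real CARD('a) ^ n * E_fun f" using sv E0 by (intro mult_right_mono) auto
    finally have key: "real (card (Aset f n)) * (real (z+1) * real (z+2) / 2) * (1 - 1 / real CARD('a))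
         \<le> real CARD('a) ^ n * E_fun f" .
    have Nb: "real n ^ 2 / 8 \<le> real (z+1) * real (z+2) / 2"
    proof -
      have "real (n * n) \<le> real (4 * ((z + 1) * (z + 2)))" using nat_sq_bound[of n] by (simp only: z_def of_nat_le_iff)
      then show ?thesis by (simp add: power2_eq_square algebra_simps)
    qed
    have "real (card (Aset f n)) \<le> 8 * (real CARD('a) ^ n * E_fun f) / (real n ^ 2 * (1 - 1 / real CARD('a)))"
      by (rule real_final[OF key Nb]) (use n1 q1 in auto)
    then show ?thesis using Ac by (simp add: field_simps)
  qed
qed



lemma irreducible_smult:
  fixes p :: "'a::field poly"
  assumes "c \<noteq> 0"
  shows "irreducible (smult c p) \<longleftrightarrow> irreducible p"
proof -
  have e: "smult c p = [:c:] * p" by simp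
  have "is_unit [:c:]" using assms by (simp add: is_unit_iff_degree)
  then show ?thesis unfolding e by (rule irreducible_mult_unit_left)
qed

lemma E_fun_smult: "c \<noteq> 0 \<Longrightarrow> E_fun (smult c f) = E_fun f"
  by (simp add: E_fun_def dvd_smult_iff)

lemma A_tilde_sub:
  fixes f :: "'a::{finite,field} poly"
  assumes df: "degree f < n"
  shows "{h. irreducible h \<and> degree h = n \<and> irreducible (h + f) \<and> degree (h + f) = n}
         \<subseteq> (\<Union>u\<in>UNIV - {0}. smult u ` Aset (smult (inverse u) f) n)"
proof
  fix h assume "h \<in> {h. irreducible h \<and> degree h = n \<and> irreducible (h + f) \<and> degree (h + f) = n}"
  then have ih: "irreducible h" and dh: "degree h = n" and ihf: "irreducible (h + f)" and dhf: "degree (h + f) = n"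
    by auto
  define u where "u = lead_coeff h"
  have h0: "h \<noteq> 0" using ih by auto
  have u0: "u \<noteq> 0" using h0 by (simp add: u_def)
  define k where "k = smult (inverse u) h"
  have lhf: "lead_coeff (h + f) = u"
    using lead_coeff_add_le[of f h] df dh by (simp add: u_def add.commute)
  have "k \<in> Aset (smult (inverse u) f) n"
  proof -
    have a1: "lead_coeff k = 1" using u0 by (simp add: k_def u_def)
    have a2: "irreducible k" using ih u0 by (simp add: k_def irreducible_smult)
    have a3: "degree k = n" using dh u0 by (simp add: k_def)
    have kf: "k + smult (inverse u) f = smult (inverse u) (h + f)" by (simp add: k_def smult_add_right)
    have a4: "lead_coeff (smult (inverse u) (h + f)) = 1" using lhf u0 by simp
    have a5: "irreducible (smult (inverse u) (h + f))" using ihf u0 by (simp add: irreducible_smult)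
    have a6: "degree (smult (inverse u) (h + f)) = n" using dhf u0 by simp
    show ?thesis unfolding Aset_def mem_Collect_eq kf using a1 a2 a3 a4 a5 a6 by blast
  qed
  moreover have "h = smult u k" using u0 by (simp add: k_def)
  ultimately show "h \<in> (\<Union>u\<in>UNIV - {0}. smult u ` Aset (smult (inverse u) f) n)" using u0 by blast
qed

lemma final_arith:
  fixes Q N P E :: real
  assumes "Q \<ge> 2" "N > 0"
  shows "(Q - 1) * (8 * P / (N * (1 - 1 / Q)) * E) = 8 * (P * Q) / N * E"
proof -
  have nz: "Q - 1 \<noteq> 0" "Q \<noteq> 0" "N \<noteq> 0" using assms by auto
  have h1: "1 - 1 / Q = (Q - 1) / Q" using nz by (simp add: field_simps)
  have "(Q - 1) * (8 * P / (N * ((Q - 1) / Q)) * E) = 8 * (P * Q) / N * E"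
    using nz by (simp add: field_simps)
  then show ?thesis unfolding h1 .
qed

lemma main_At:
  fixes f :: "'a::{finite,field} poly" and n :: nat
  assumes n1: "n \<ge> 1" and f0: "f \<noteq> 0" and df: "degree f < n"
  shows "real (A_tilde_count f n) \<le> 8 * real CARD('a) ^ (n + 1) / real n ^ 2 * E_fun f"
proof -
  define B where "B = 8 * real CARD('a) ^ n / (real n ^ 2 * (1 - 1 / real CARD('a))) * E_fun f"
  have finA: "finite (Aset g n)" for g :: "'a poly"
  proof -
    have "Aset g n \<subseteq> Mon n" by (auto simp: Aset_def Mon_def)
    then show ?thesis using finite_Mon finite_subset by blast
  qed
  have bnd: "real (card (Aset (smult (inverse u) f) n)) \<le> B" if "u \<noteq> (0::'a)" for u
  proof -
    have "real (card (Aset (smult (inverse u) f) n)) = real (A_count (smult (inverse u) f) n)"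
      by (simp add: A_count_def Aset_def)
    also have "\<dots> \<le> 8 * real CARD('a) ^ n / (real n ^ 2 * (1 - 1 / real CARD('a))) * E_fun (smult (inverse u) f)"
      by (rule main_A) (use n1 f0 df that in auto)
    also have "\<dots> = B" using that by (simp add: B_def E_fun_smult)
    finally show ?thesis .
  qed
  have "A_tilde_count f n \<le> card (\<Union>u\<in>UNIV - {0}. smult u ` Aset (smult (inverse u) f) n)"
    unfolding A_tilde_count_def
    by (rule card_mono[OF _ A_tilde_sub[OF df]]) (use finA in auto)
  also have "\<dots> \<le> (\<Sum>u\<in>UNIV - {0}. card (smult u ` Aset (smult (inverse u) f) n))"
    by (rule card_UN_le) simp
  also have "\<dots> \<le> (\<Sum>u\<in>UNIV - {0::'a}. card (Aset (smult (inverse u) f) n))"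
    by (intro sum_mono card_image_le finA)
  finally have "real (A_tilde_count f n) \<le> real (\<Sum>u\<in>UNIV - {0::'a}. card (Aset (smult (inverse u) f) n))"
    by (simp only: of_nat_le_iff)
  also have "\<dots> = (\<Sum>u\<in>UNIV - {0::'a}. real (card (Aset (smult (inverse u) f) n)))" by simp
  also have "\<dots> \<le> (\<Sum>u\<in>UNIV - {0::'a}. B)" using bnd by (intro sum_mono) auto
  also have "\<dots> = (real CARD('a) - 1) * B"
  proof -
    have "card (UNIV - {0::'a}) = CARD('a) - 1" by (simp add: card_Diff_singleton)
    moreover have "CARD('a) \<ge> 1" using q_ge2[where 'a='a] by simp
    ultimately show ?thesis by (simp add: of_nat_diff)
  qed
  also have "\<dots> = 8 * real CARD('a) ^ (n + 1) / real n ^ 2 * E_fun f"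
  proof -
    have q: "real CARD('a) \<ge> 2" by (rule q_ge2)
    have "real n ^ 2 > 0" using n1 by simp
    then show ?thesis unfolding B_def using final_arith[OF q, of "real n ^ 2" "real CARD('a) ^ n" "E_fun f"] by simp
  qed
  finally show ?thesis .
qed

theorem lemma6:
  fixes f :: "'a::{finite,field} poly" and n :: nat
  assumes "n \<ge> 1" and "f \<noteq> 0" and "degree f < n"
  shows "real (A_count f n) \<le> 8 * real CARD('a) ^ n / (real n ^ 2 * (1 - 1 / real CARD('a))) * E_fun f
       \<and> real (A_tilde_count f n) \<le> 8 * real CARD('a) ^ (n + 1) / real n ^ 2 * E_fun f"
  using main_A[OF assms] main_At[OF assms] by blast


end
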